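(* Let $m\ge1$, let $\mathbf b\in\mathbb R^{2m}$ be a fixed unit vector, and fix pairwise distinct times $t_1,\dots,t_{m(2m+1)}\in[0,\infty)$. For all $(C,B)\in\mathcal G_G$ outside a set of measure zero (with respect to the measure on $\mathcal G_G$ described below), with $X_t:=e^{tC}$, the maps $$\mathbb S_{2m}(\mathbb R)\ni\Gamma\mapsto\big(\mathbf b^T X_{t_k}\Gamma X_{t_k}^T\mathbf b\big)_{k=1}^{m(2m+1)}\in\mathbb R^{m(2m+1)}$$ and $$\mathbb R^{2m}\ni\mathbf d\mapsto\big(\mathbf b^T X_{t_k}\mathbf d\big)_{k=1}^{2m}\in\mathbb R^{2m}$$ are injective.
   Context: Let $\Omega=\begin{pmatrix}0&I_m\\-I_m&0\end{pmatrix}$. $\mathcal G_G\subset\mathbb M_{2m}(\mathbb R)\times\mathbb S_{2m}(\mathbb R)$ is the set of pairs $(C,B)$ such that, writing $C=(A-H)\Omega$ with $A^T=-A$ and $H^T=H$ (this decomposition is unique), the Hermitian matrix $iA+B$ is positive semidefinite. These pairs parametrize Gaussian quantum dynamical semigroups $(X_t,Y_t)_{t\ge0}$ with $X_t=e^{tC}$, $Y_t=2\int_0^tX_s^T\Omega^TB\Omega X_s\,ds$. The measure on $\mathcal G_G$ is the restriction of Lebesgue measure on $\mathbb M_{2m}(\mathbb R)\times\mathbb S_{2m}(\mathbb R)\cong\mathbb R^{4m^2}\times\mathbb R^{m(2m+1)}$ (entries of $C$ and upper-triangular entries of $B$ as coordinates). *)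

theory Defs
  imports "HOL-Analysis.Analysis"
begin

text \<open>Square matrices of size n are represented as functions nat => nat => 'a,
  only entries with indices below n being relevant; vectors as nat => 'a.\<close>

definition mmult :: "nat \<Rightarrow> (nat \<Rightarrow> nat \<Rightarrow> 'a::comm_semiring_1) \<Rightarrow> (nat \<Rightarrow> nat \<Rightarrow> 'a) \<Rightarrow> nat \<Rightarrow> nat \<Rightarrow> 'a" where
  "mmult n A B = (\<lambda>i j. \<Sum>k<n. A i k * B k j)"

definition mident :: "nat \<Rightarrow> nat \<Rightarrow> 'a::comm_semiring_1" where
  "mident = (\<lambda>i j. if i = j then 1 else 0)"

fun mpow :: "nat \<Rightarrow> (nat \<Rightarrow> nat \<Rightarrow> 'a::comm_semiring_1) \<Rightarrow> nat \<Rightarrow> nat \<Rightarrow> nat \<Rightarrow> 'a" where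
  "mpow n A 0 = mident"
| "mpow n A (Suc k) = mmult n A (mpow n A k)"

definition mexp :: "nat \<Rightarrow> (nat \<Rightarrow> nat \<Rightarrow> real) \<Rightarrow> nat \<Rightarrow> nat \<Rightarrow> real" where
  "mexp n A = (\<lambda>i j. \<Sum>k. mpow n A k i j / fact k)"

definition mtrans :: "(nat \<Rightarrow> nat \<Rightarrow> 'a) \<Rightarrow> nat \<Rightarrow> nat \<Rightarrow> 'a" where
  "mtrans A = (\<lambda>i j. A j i)"

text \<open>The symplectic matrix Omega = [[0, I_m], [-I_m, 0]] of size 2m.\<close>
definition Omega :: "nat \<Rightarrow> nat \<Rightarrow> nat \<Rightarrow> real" where
  "Omega m = (\<lambda>i j. if i < m \<and> j = i + m then 1
                    else if m \<le> i \<and> i < 2*m \<and> j = i - m then -1 else 0)"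

definition herm_psd :: "nat \<Rightarrow> (nat \<Rightarrow> nat \<Rightarrow> complex) \<Rightarrow> bool" where
  "herm_psd n M \<longleftrightarrow>
     (\<forall>i<n. \<forall>j<n. M j i = cnj (M i j)) \<and>
     (\<forall>z::nat \<Rightarrow> complex. let q = (\<Sum>i<n. \<Sum>j<n. cnj (z i) * M i j * z j)
                          in Im q = 0 \<and> Re q \<ge> 0)"

definition in_GG :: "nat \<Rightarrow> (nat \<Rightarrow> nat \<Rightarrow> real) \<Rightarrow> (nat \<Rightarrow> nat \<Rightarrow> real) \<Rightarrow> bool" where
  "in_GG m C B \<longleftrightarrow>
     (\<forall>i<2*m. \<forall>j<2*m. B i j = B j i) \<and>
     (\<exists>A H. (\<forall>i<2*m. \<forall>j<2*m. A j i = - A i j \<and> H j i = H i j) \<and>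
            (\<forall>i<2*m. \<forall>j<2*m. C i j = mmult (2*m) (\<lambda>a b. A a b - H a b) (Omega m) i j) \<and>
            herm_psd (2*m) (\<lambda>i j. \<i> * complex_of_real (A i j) + complex_of_real (B i j)))"

text \<open>Coordinates on M_{2m}(R) x S_{2m}(R): Inl (i,j) for entry (i,j) of C,
  Inr (i,j) with i <= j for the upper-triangular entry (i,j) of B.\<close>
definition coord_index :: "nat \<Rightarrow> ((nat \<times> nat) + (nat \<times> nat)) set" where
  "coord_index m = Inl ` ({..<2*m} \<times> {..<2*m}) \<union> Inr ` {(i,j). i \<le> j \<and> j < 2*m}"

definition coord_measure :: "nat \<Rightarrow> ((nat \<times> nat) + (nat \<times> nat) \<Rightarrow> real) measure" where
  "coord_measure m = PiM (coord_index m) (\<lambda>_. lborel)"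

definition Cmat :: "((nat \<times> nat) + (nat \<times> nat) \<Rightarrow> real) \<Rightarrow> nat \<Rightarrow> nat \<Rightarrow> real" where
  "Cmat p = (\<lambda>i j. p (Inl (i, j)))"

definition Bmat :: "((nat \<times> nat) + (nat \<times> nat) \<Rightarrow> real) \<Rightarrow> nat \<Rightarrow> nat \<Rightarrow> real" where
  "Bmat p = (\<lambda>i j. p (Inr (min i j, max i j)))"

definition Xt :: "nat \<Rightarrow> (nat \<Rightarrow> nat \<Rightarrow> real) \<Rightarrow> real \<Rightarrow> nat \<Rightarrow> nat \<Rightarrow> real" where
  "Xt m C t = mexp (2*m) (\<lambda>i j. t * C i j)"

definition sym_mats :: "nat \<Rightarrow> (nat \<Rightarrow> nat \<Rightarrow> real) set" where
  "sym_mats n = {G. (\<forall>i j. G i j = G j i) \<and> (\<forall>i j. n \<le> i \<or> n \<le> j \<longrightarrow> G i j = 0)}"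

definition vecs :: "nat \<Rightarrow> (nat \<Rightarrow> real) set" where
  "vecs n = {d. \<forall>i. n \<le> i \<longrightarrow> d i = 0}"

definition bilin :: "nat \<Rightarrow> (nat \<Rightarrow> real) \<Rightarrow> (nat \<Rightarrow> nat \<Rightarrow> real) \<Rightarrow> (nat \<Rightarrow> real) \<Rightarrow> real" where
  "bilin n b M v = (\<Sum>i<n. \<Sum>j<n. b i * M i j * v j)"

end

theory Submission
  imports Defs "Jordan_Normal_Form.Determinant" "HOL-Complex_Analysis.Complex_Analysis"
begin


lemma rolle_set:
  fixes f f' :: "real \<Rightarrow> real"
  assumes der: "\<And>x. (f has_real_derivative f' x) (at x)"
  shows "finite S \<Longrightarrow> card S = Suc k \<Longrightarrow> (\<forall>s\<in>S. f s = 0) \<Longrightarrow>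
    \<exists>S'. finite S' \<and> card S' = k \<and> S' \<subseteq> {..<Max S} \<and> (\<forall>s\<in>S'. f' s = 0)"
proof (induction k arbitrary: S)
  case 0
  then show ?case by (intro exI[of _ "{}"]) auto
next
  case (Suc k)
  define M where "M = Max S"
  define S0 where "S0 = S - {M}"
  have ne: "S \<noteq> {}" using Suc by auto
  have MS: "M \<in> S" unfolding M_def using Suc.prems ne by auto
  have fS0: "finite S0" and cS0: "card S0 = Suc k" using Suc.prems MS by (auto simp: S0_def)
  have z0: "\<forall>s\<in>S0. f s = 0" using Suc.prems by (auto simp: S0_def)
  obtain S0' where S0': "finite S0'" "card S0' = k" "S0' \<subseteq> {..<Max S0}" "\<forall>s\<in>S0'. f' s = 0"
    using Suc.IH[OF fS0 cS0 z0] by blast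
  have ne0: "S0 \<noteq> {}" using cS0 by auto
  have M0in: "Max S0 \<in> S0" using fS0 ne0 by auto
  have "Max S0 \<le> M" using M0in Suc.prems unfolding M_def S0_def by auto
  moreover have "Max S0 \<noteq> M" using M0in unfolding S0_def by auto
  ultimately have lt: "Max S0 < M" by auto
  have fa: "f (Max S0) = f M" using z0 M0in Suc.prems(3) MS by auto
  have cont: "continuous_on {Max S0..M} f"
    by (rule continuous_at_imp_continuous_on) (meson DERIV_isCont der)
  obtain z where z: "Max S0 < z" "z < M" "(\<lambda>v. f' z * v) = (\<lambda>v. 0)"
    using Rolle_deriv[OF lt fa cont, of "\<lambda>x v. f' x * v"] der
    unfolding has_field_derivative_def by (metis mult.commute)
  have fz: "f' z = 0" using fun_cong[OF z(3), of 1] by simp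
  show ?case
  proof (intro exI[of _ "insert z S0'"] conjI)
    show "finite (insert z S0')" using S0' by auto
    have "z \<notin> S0'" using S0'(3) z(1) by auto
    then show "card (insert z S0') = Suc k" using S0' by auto
    show "insert z S0' \<subseteq> {..<Max S}" using S0'(3) z lt unfolding M_def by auto
    show "\<forall>s\<in>insert z S0'. f' s = 0" using S0'(4) fz by auto
  qed
qed

lemma exp_sum_zero_aux:
  fixes P :: "'p set"
  assumes "finite P"
  shows "\<forall>c \<mu> S. inj_on \<mu> P \<and> finite S \<and> card P \<le> card S \<and>
           (\<forall>s\<in>S. (\<Sum>p\<in>P. c p * exp (\<mu> p * s)) = (0::real)) \<longrightarrow> (\<forall>p\<in>P. c p = 0)"
  using assms
proof (induction P rule: finite_induct)
  case empty
  then show ?case by auto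
next
  case (insert p0 P)
  show ?case
  proof (intro allI impI)
    fix c \<mu> :: "'p \<Rightarrow> real" and S :: "real set"
    assume A: "inj_on \<mu> (insert p0 P) \<and> finite S \<and> card (insert p0 P) \<le> card S \<and>
           (\<forall>s\<in>S. (\<Sum>p\<in>insert p0 P. c p * exp (\<mu> p * s)) = 0)"
    have inj: "inj_on \<mu> (insert p0 P)" and fS: "finite S" and cS: "card P + 1 \<le> card S"
      and z: "\<forall>s\<in>S. (\<Sum>p\<in>insert p0 P. c p * exp (\<mu> p * s)) = 0"
      using A insert by auto
    define h where "h s = c p0 + (\<Sum>p\<in>P. c p * exp ((\<mu> p - \<mu> p0) * s))" for s
    define h' where "h' s = (\<Sum>p\<in>P. c p * (\<mu> p - \<mu> p0) * exp ((\<mu> p - \<mu> p0) * s))" for s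
    have hz: "\<forall>s\<in>S. h s = 0"
    proof
      fix s assume "s \<in> S"
      then have "(\<Sum>p\<in>insert p0 P. c p * exp (\<mu> p * s)) = 0" using z by auto
      then have "exp (- \<mu> p0 * s) * (\<Sum>p\<in>insert p0 P. c p * exp (\<mu> p * s)) = 0" by simp
      moreover have "exp (- \<mu> p0 * s) * (\<Sum>p\<in>insert p0 P. c p * exp (\<mu> p * s)) = h s"
      proof -
        have e: "\<And>p. exp (- \<mu> p0 * s) * (c p * exp (\<mu> p * s)) = c p * exp ((\<mu> p - \<mu> p0) * s)"
        proof -
          fix p
          have "exp ((\<mu> p - \<mu> p0) * s) = exp (\<mu> p * s) * exp (- \<mu> p0 * s)"
          proof -
            have "(\<mu> p - \<mu> p0) * s = \<mu> p * s + (- \<mu> p0 * s)" by (simp add: algebra_simps)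
            then show ?thesis using exp_add[of "\<mu> p * s" "- \<mu> p0 * s"] by simp
          qed
          then show "exp (- \<mu> p0 * s) * (c p * exp (\<mu> p * s)) = c p * exp ((\<mu> p - \<mu> p0) * s)"
            by (simp only: mult_ac)
        qed
        show ?thesis unfolding h_def using insert(1,2)
          by (simp only: sum.insert distrib_left sum_distrib_left e) simp
      qed
      ultimately show "h s = 0" by simp
    qed
    have der: "(h has_real_derivative h' x) (at x)" for x
      unfolding h_def h'_def
      by (auto intro!: derivative_eq_intros simp: algebra_simps)
    obtain k where k: "card S = Suc k" and kP: "card P \<le> k" using cS
      by (metis add.commute add_Suc_right le_iff_add plus_1_eq_Suc)
    obtain S' where S': "finite S'" "card S' = k" "\<forall>s\<in>S'. h' s = 0"
      using rolle_set[OF der fS k] hz by blast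
    have inj': "inj_on (\<lambda>p. \<mu> p - \<mu> p0) P" using inj by (auto simp: inj_on_def)
    have c': "\<forall>p\<in>P. c p * (\<mu> p - \<mu> p0) = 0"
      using insert.IH[rule_format, where c="\<lambda>p. c p * (\<mu> p - \<mu> p0)" and \<mu>="\<lambda>p. \<mu> p - \<mu> p0" and S=S'] inj' S' kP
      unfolding h'_def by auto
    have cP: "\<forall>p\<in>P. c p = 0"
    proof
      fix p assume "p \<in> P"
      then have "\<mu> p \<noteq> \<mu> p0" using inj insert(2) unfolding inj_on_def by blast
      then show "c p = 0" using c' \<open>p \<in> P\<close> by auto
    qed
    obtain s where "s \<in> S" using k by (metis card.empty equals0I nat.distinct(1))
    then have "h s = 0" using hz by auto
    then have "c p0 = 0" unfolding h_def using cP by simp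
    then show "\<forall>p\<in>insert p0 P. c p = 0" using cP by auto
  qed
qed

lemma exp_sum_zero:
  fixes P :: "'p set"
  assumes "finite P" "inj_on \<mu> P" "finite S" "card P \<le> card S"
    "\<And>s. s\<in>S \<Longrightarrow> (\<Sum>p\<in>P. c p * exp (\<mu> p * s)) = (0::real)" "p \<in> P"
  shows "c p = 0"
  using exp_sum_zero_aux[OF assms(1)] assms by blast



lemma entire_real_zeros_countable:
  fixes h :: "complex \<Rightarrow> complex"
  assumes hol: "h holomorphic_on UNIV" and nz: "h w0 \<noteq> 0"
  shows "countable {s::real. h (of_real s) = 0}"
proof -
  let ?K = "{s::real. h (of_real s) = 0}"
  let ?U = "of_real ` ?K :: complex set"
  have "countable ?U"
  proof (rule no_limpt_imp_countable)
    fix \<xi> show "\<not> \<xi> islimpt ?U"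
    proof
      assume "\<xi> islimpt ?U"
      then have "h w0 = 0"
        by (rule analytic_continuation[OF hol open_UNIV connected_UNIV subset_UNIV UNIV_I _ _ UNIV_I]) auto
      with nz show False by simp
    qed
  qed
  then have "countable (Re ` ?U)" by simp
  moreover have "Re ` ?U = ?K" by (auto simp: image_image)
  ultimately show ?thesis by simp
qed

lemma psf_lborel: "product_sigma_finite (\<lambda>_. lborel)"
  by (simp add: product_sigma_finite_def sigma_finite_lborel)

lemma zero_null_aux:
  fixes I :: "'i set"
  assumes "finite I"
  shows "\<forall>(G :: ('i \<Rightarrow> complex) \<Rightarrow> complex) x0.
    (\<forall>z a. (\<lambda>w. G (z(a:=w))) holomorphic_on UNIV) \<and>
    (\<lambda>x. G (\<lambda>i. complex_of_real (x i))) \<in> borel_measurable (PiM I (\<lambda>_. lborel)) \<and>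
    x0 \<in> PiE I (\<lambda>_. UNIV) \<and> G (\<lambda>i. of_real (x0 i)) \<noteq> 0 \<longrightarrow>
    {x \<in> space (PiM I (\<lambda>_. lborel)). G (\<lambda>i. of_real (x i)) = 0} \<in> null_sets (PiM I (\<lambda>_. lborel))"
  using assms
proof (induction I rule: finite_induct)
  case empty
  show ?case
  proof (intro allI impI)
    fix G :: "('i \<Rightarrow> complex) \<Rightarrow> complex" and x0 :: "'i \<Rightarrow> real"
    assume A: "(\<forall>z a. (\<lambda>w. G (z(a:=w))) holomorphic_on UNIV) \<and>
      (\<lambda>x. G (\<lambda>i. complex_of_real (x i))) \<in> borel_measurable (PiM {} (\<lambda>_. lborel)) \<and>
      x0 \<in> PiE {} (\<lambda>_. UNIV) \<and> G (\<lambda>i. of_real (x0 i)) \<noteq> 0"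
    then have "x0 = (\<lambda>_. undefined)" by auto
    then have "{x \<in> space (PiM {} (\<lambda>_. lborel)). G (\<lambda>i. of_real (x i)) = 0} = {}"
      using A by (auto simp: space_PiM_empty)
    then show "{x \<in> space (PiM {} (\<lambda>_. lborel)). G (\<lambda>i. of_real (x i)) = 0} \<in> null_sets (PiM {} (\<lambda>_. lborel))"
      by (metis null_sets.empty_sets)
  qed
next
  case (insert a I)
  show ?case
  proof (intro allI impI)
    fix G :: "('i \<Rightarrow> complex) \<Rightarrow> complex" and x0 :: "'i \<Rightarrow> real"
    let ?M = "PiM I (\<lambda>_. lborel) :: ('i \<Rightarrow> real) measure"
    let ?M' = "PiM (insert a I) (\<lambda>_. lborel) :: ('i \<Rightarrow> real) measure"
    assume A: "(\<forall>z a. (\<lambda>w. G (z(a:=w))) holomorphic_on UNIV) \<and>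
      (\<lambda>x. G (\<lambda>i. complex_of_real (x i))) \<in> borel_measurable ?M' \<and>
      x0 \<in> PiE (insert a I) (\<lambda>_. UNIV) \<and> G (\<lambda>i. of_real (x0 i)) \<noteq> 0"
    have hol: "\<And>z b. (\<lambda>w. G (z(b:=w))) holomorphic_on UNIV" using A by blast
    define g where "g x = G (\<lambda>i. complex_of_real (x i))" for x
    have gm: "g \<in> borel_measurable ?M'" using A unfolding g_def by blast
    have x0: "x0 \<in> PiE (insert a I) (\<lambda>_. UNIV)" and gx0: "g x0 \<noteq> 0" using A unfolding g_def by auto
    define s0 where "s0 = x0 a"
    define G' where "G' z = G (z(a := complex_of_real s0))" for z
    define x0' where "x0' = x0(a := undefined)"
    have upd: "(\<lambda>i. complex_of_real ((x(a := s)) i)) = (\<lambda>i. complex_of_real (x i))(a := of_real s)" for x s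
      by auto
    have hol': "\<forall>z b. (\<lambda>w. G' (z(b:=w))) holomorphic_on UNIV"
    proof (intro allI)
      fix z b
      show "(\<lambda>w. G' (z(b:=w))) holomorphic_on UNIV"
      proof (cases "b = a")
        case True
        then show ?thesis unfolding G'_def by simp
      next
        case False
        then have "(\<lambda>w. G' (z(b:=w))) = (\<lambda>w. G ((z(a := complex_of_real s0))(b:=w)))"
          unfolding G'_def by (simp add: fun_upd_twist)
        then show ?thesis using hol by simp
      qed
    qed
    have updm: "(\<lambda>x. x(a := s)) \<in> measurable ?M ?M'" for s :: real
      by (rule measurable_fun_upd[where J=I]) auto
    have m': "(\<lambda>x. G' (\<lambda>i. complex_of_real (x i))) \<in> borel_measurable ?M"
    proof -
      have "(\<lambda>x. G' (\<lambda>i. complex_of_real (x i))) = (\<lambda>x. g (x(a := s0)))"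
        unfolding G'_def g_def upd by simp
      moreover have "(\<lambda>x. g (x(a := s0))) \<in> borel_measurable ?M"
        using measurable_comp[OF updm gm] by (simp add: comp_def)
      ultimately show ?thesis by simp
    qed
    have x0': "x0' \<in> PiE I (\<lambda>_. UNIV)" using x0 insert(2) unfolding x0'_def by (auto simp: PiE_def extensional_def)
    have G'x0': "G' (\<lambda>i. of_real (x0' i)) \<noteq> 0"
    proof -
      have "(\<lambda>i. complex_of_real (x0' i))(a := complex_of_real s0) = (\<lambda>i. of_real (x0 i))"
        unfolding x0'_def s0_def by auto
      then show ?thesis using gx0 unfolding G'_def g_def by simp
    qed
    define Z' where "Z' = {x \<in> space ?M. G' (\<lambda>i. of_real (x i)) = 0}"
    have Z'null: "Z' \<in> null_sets ?M"
      unfolding Z'_def using insert.IH hol' m' x0' G'x0' by blast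
    define Z where "Z = {x \<in> space ?M'. g x = 0}"
    have Zs: "Z \<in> sets ?M'"
    proof -
      have "Z = g -` {0} \<inter> space ?M'" unfolding Z_def by auto
      then show ?thesis using measurable_sets[OF gm, of "{0}"] by simp
    qed
    have inner0: "(\<integral>\<^sup>+ s. indicator Z (y(a := s)) \<partial>lborel) = 0" if y: "y \<in> space ?M" "y \<notin> Z'" for y
    proof -
      define h where "h w = G ((\<lambda>i. complex_of_real (y i))(a := w))" for w
      have hh: "h holomorphic_on UNIV" unfolding h_def using hol by blast
      have "h (of_real s0) \<noteq> 0" using y unfolding Z'_def h_def G'_def by auto
      then have cK: "countable {s::real. h (of_real s) = 0}"
        using entire_real_zeros_countable[OF hh] by blast
      have "(\<integral>\<^sup>+ s. indicator Z (y(a := s)) \<partial>lborel) \<le> (\<integral>\<^sup>+ s. indicator {s::real. h (of_real s) = 0} s \<partial>lborel)"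
      proof (rule nn_integral_mono)
        fix s :: real
        have "y(a := s) \<in> Z \<Longrightarrow> h (of_real s) = 0"
          unfolding Z_def g_def h_def by (simp only: upd mem_Collect_eq)
        then show "indicator Z (y(a := s)) \<le> (indicator {s::real. h (of_real s) = 0} s :: ennreal)"
          by (auto simp: indicator_def)
      qed
      also have "\<dots> = emeasure lborel {s::real. h (of_real s) = 0}"
        using countable_imp_null_set_lborel[OF cK] by (intro nn_integral_indicator) auto
      also have "\<dots> = 0" using countable_imp_null_set_lborel[OF cK] by auto
      finally show ?thesis by simp
    qed
    have "emeasure ?M' Z = (\<integral>\<^sup>+ x. indicator Z x \<partial>?M')"
      using Zs by (simp add: nn_integral_indicator)
    also have "\<dots> = (\<integral>\<^sup>+ y. (\<integral>\<^sup>+ s. indicator Z (y(a := s)) \<partial>lborel) \<partial>?M)"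
      using product_sigma_finite.product_nn_integral_insert[OF psf_lborel insert(1,2), of "indicator Z"] Zs
      by simp
    also have "\<dots> = (\<integral>\<^sup>+ y. 0 \<partial>?M)"
    proof (rule nn_integral_cong_AE)
      show "AE y in ?M. (\<integral>\<^sup>+ s. indicator Z (y(a := s)) \<partial>lborel) = 0"
        by (rule AE_I'[OF Z'null]) (auto dest: inner0)
    qed
    also have "\<dots> = 0" by simp
    finally have "emeasure ?M' Z = 0" .
    then have "Z \<in> null_sets ?M'" using Zs by (auto intro: null_setsI)
    then show "{x \<in> space ?M'. G (\<lambda>i. of_real (x i)) = 0} \<in> null_sets ?M'"
      unfolding Z_def g_def by simp
  qed
qed

lemma zero_null:
  fixes I :: "'i set" and G :: "('i \<Rightarrow> complex) \<Rightarrow> complex"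
  assumes "finite I" "\<And>z a. (\<lambda>w. G (z(a:=w))) holomorphic_on UNIV"
    "(\<lambda>x. G (\<lambda>i. complex_of_real (x i))) \<in> borel_measurable (PiM I (\<lambda>_. lborel))"
    "x0 \<in> PiE I (\<lambda>_. UNIV)" "G (\<lambda>i. of_real (x0 i)) \<noteq> 0"
  shows "{x \<in> space (PiM I (\<lambda>_. lborel)). G (\<lambda>i. of_real (x i)) = 0} \<in> null_sets (PiM I (\<lambda>_. lborel))"
  using zero_null_aux[OF assms(1)] assms(2-) by blast



definition cmexp :: "nat \<Rightarrow> (nat \<Rightarrow> nat \<Rightarrow> complex) \<Rightarrow> nat \<Rightarrow> nat \<Rightarrow> complex" where
  "cmexp n A = (\<lambda>i j. \<Sum>k. mpow n A k i j / fact k)"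

lemma mpow_of_real:
  "mpow n (\<lambda>i j. complex_of_real (A i j)) k i j = of_real (mpow n A k i j)"
proof (induction k arbitrary: i j)
  case 0 then show ?case by (simp add: mident_def)
next
  case (Suc k) then show ?case by (simp add: mmult_def)
qed

lemma mpow_bound:
  fixes A :: "nat \<Rightarrow> nat \<Rightarrow> 'a::real_normed_field"
  assumes R: "\<And>i j. i < n \<Longrightarrow> j < n \<Longrightarrow> norm (A i j) \<le> R" and i: "i < n"
  shows "norm (mpow n A k i j) \<le> (real n * R) ^ k"
  using i
proof (induction k arbitrary: i j)
  case 0 then show ?case by (simp add: mident_def)
next
  case (Suc k)
  have R0: "0 \<le> R" using R[OF Suc.prems Suc.prems] norm_ge_zero order_trans by blast
  have "norm (mpow n A (Suc k) i j) = norm (\<Sum>l<n. A i l * mpow n A k l j)"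
    by (simp add: mmult_def)
  also have "\<dots> \<le> (\<Sum>l<n. norm (A i l) * norm (mpow n A k l j))"
    by (rule order_trans[OF norm_sum]) (simp add: norm_mult)
  also have "\<dots> \<le> (\<Sum>l<n. R * (real n * R) ^ k)"
    by (rule sum_mono) (intro mult_mono R Suc.prems Suc.IH; simp add: R0)
  also have "\<dots> = (real n * R) ^ Suc k" by simp
  finally show ?case .
qed

lemma entry_le_sum:
  fixes A :: "nat \<Rightarrow> nat \<Rightarrow> 'a::real_normed_vector"
  assumes "i < n" "j < n"
  shows "norm (A i j) \<le> (\<Sum>a<n. \<Sum>b<n. norm (A a b))"
proof -
  have "norm (A i j) \<le> (\<Sum>b<n. norm (A i b))"
    using assms by (intro member_le_sum) auto
  also have "\<dots> \<le> (\<Sum>a<n. \<Sum>b<n. norm (A a b))"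
    using assms by (intro member_le_sum[where f="\<lambda>a. \<Sum>b<n. norm (A a b)"]) (auto intro: sum_nonneg)
  finally show ?thesis .
qed

lemma summable_exp_bound: "summable (\<lambda>k. (x::real) ^ k / fact k)"
  using summable_exp[of x] by (simp add: field_simps)

lemma mpow_summable:
  fixes A :: "nat \<Rightarrow> nat \<Rightarrow> 'a::{real_normed_field,banach}"
  assumes "i < n"
  shows "summable (\<lambda>k. mpow n A k i j / fact k)"
proof (rule summable_comparison_test'[OF summable_exp_bound])
  fix k :: nat
  let ?R = "\<Sum>a<n. \<Sum>b<n. norm (A a b)"
  have "norm (mpow n A k i j / fact k) = norm (mpow n A k i j) / fact k"
    by (simp add: norm_divide norm_fact)
  also have "\<dots> \<le> (real n * ?R) ^ k / fact k"
    by (intro divide_right_mono mpow_bound entry_le_sum assms) auto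
  finally show "norm (mpow n A k i j / fact k) \<le> (real n * ?R) ^ k / fact k" .
qed

lemma cmexp_of_real:
  assumes "i < n"
  shows "cmexp n (\<lambda>i j. complex_of_real (A i j)) i j = of_real (mexp n A i j)"
proof -
  have "(\<lambda>k. mpow n A k i j / fact k) sums mexp n A i j"
    unfolding mexp_def using summable_sums[OF mpow_summable[OF assms]] .
  then have "(\<lambda>k. complex_of_real (mpow n A k i j / fact k)) sums complex_of_real (mexp n A i j)"
    by (rule sums_of_real)
  then have "(\<lambda>k. mpow n (\<lambda>i j. complex_of_real (A i j)) k i j / fact k) sums complex_of_real (mexp n A i j)"
    by (simp add: mpow_of_real)
  then show ?thesis unfolding cmexp_def by (simp add: sums_iff)
qed

lemma mpow_holo:
  assumes "\<And>i j. (\<lambda>w. A w i j) holomorphic_on UNIV"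
  shows "(\<lambda>w. mpow n (A w) k i j) holomorphic_on UNIV"
proof (induction k arbitrary: i j)
  case 0 then show ?case by (simp add: mident_def)
next
  case (Suc k) then show ?case
    by (simp add: mmult_def) (intro holomorphic_on_sum holomorphic_on_mult assms; simp)
qed

lemma cmexp_holo:
  fixes \<alpha> \<beta> :: "nat \<Rightarrow> nat \<Rightarrow> complex"
  assumes "i < n"
  shows "(\<lambda>w. cmexp n (\<lambda>a b. \<alpha> a b + \<beta> a b * w) i j) holomorphic_on UNIV"
proof -
  let ?A = "\<lambda>w a b. \<alpha> a b + \<beta> a b * w"
  have hA: "\<And>a b. (\<lambda>w. ?A w a b) holomorphic_on UNIV" by (intro holomorphic_intros)
  show ?thesis
    unfolding cmexp_def
  proof (rule holomorphic_uniform_sequence[OF open_UNIV, where f="\<lambda>N w. \<Sum>k<N. mpow n (?A w) k i j / fact k"])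
    fix N show "(\<lambda>w. \<Sum>k<N. mpow n (?A w) k i j / fact k) holomorphic_on UNIV"
      by (intro holomorphic_on_sum holomorphic_on_divide mpow_holo hA holomorphic_on_const) auto
  next
    fix w0 :: complex
    let ?R = "\<Sum>a<n. \<Sum>b<n. (norm (\<alpha> a b) + norm (\<beta> a b) * (norm w0 + 1))"
    have "uniform_limit (cball w0 1) (\<lambda>N w. \<Sum>k<N. mpow n (?A w) k i j / fact k)
            (\<lambda>w. \<Sum>k. mpow n (?A w) k i j / fact k) sequentially"
    proof (rule Weierstrass_m_test[OF _ summable_exp_bound[of "real n * ?R"]])
      fix k w assume w: "w \<in> cball w0 1"
      have nw: "norm w \<le> norm w0 + 1" using w norm_triangle_sub[of w w0]
        by (auto simp: dist_norm norm_minus_commute)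
      have bnd: "norm (?A w a b) \<le> ?R" if "a < n" "b < n" for a b
      proof -
        have "norm (?A w a b) \<le> norm (\<alpha> a b) + norm (\<beta> a b) * (norm w0 + 1)"
          by (rule order_trans[OF norm_triangle_ineq]) (auto simp: norm_mult intro!: mult_left_mono nw)
        also have "\<dots> \<le> ?R"
          using entry_le_sum[OF that, of "\<lambda>a b. of_real (norm (\<alpha> a b) + norm (\<beta> a b) * (norm w0 + 1)) :: real"]
          by simp
        finally show ?thesis .
      qed
      have "norm (mpow n (?A w) k i j / fact k) = norm (mpow n (?A w) k i j) / fact k"
        by (simp add: norm_divide norm_fact)
      also have "\<dots> \<le> (real n * ?R) ^ k / fact k"
        by (intro divide_right_mono mpow_bound[OF bnd assms]) auto
      finally show "norm (mpow n (?A w) k i j / fact k) \<le> (real n * ?R) ^ k / fact k" .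
    qed
    then show "\<exists>d>0. cball w0 d \<subseteq> UNIV \<and> uniform_limit (cball w0 d) (\<lambda>N w. \<Sum>k<N. mpow n (?A w) k i j / fact k)
            (\<lambda>w. \<Sum>k. mpow n (?A w) k i j / fact k) sequentially"
      by (intro exI[of _ 1]) auto
  qed
qed

lemma component_meas:
  "(\<lambda>p. p x) \<in> borel_measurable (PiM I (\<lambda>_. lborel :: real measure))"
proof (cases "x \<in> I")
  case True
  then show ?thesis using measurable_component_singleton[OF True, of "\<lambda>_. lborel"] by simp
next
  case False
  have "(\<lambda>p::_ \<Rightarrow> real. undefined :: real) \<in> borel_measurable (PiM I (\<lambda>_. lborel :: real measure))" by simp
  then show ?thesis
    by (rule measurable_cong[THEN iffD1, rotated]) (use False in \<open>auto simp: space_PiM PiE_def extensional_def\<close>)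
qed

lemma mpow_meas:
  assumes "\<And>i j. (\<lambda>p. E p i j) \<in> borel_measurable M"
  shows "(\<lambda>p. mpow n (E p) k i j :: real) \<in> borel_measurable M"
proof (induction k arbitrary: i j)
  case 0 then show ?case by (simp add: mident_def)
next
  case (Suc k) then show ?case
    by (simp add: mmult_def) (intro borel_measurable_sum borel_measurable_times assms; simp)
qed

lemma mexp_meas:
  assumes "\<And>i j. (\<lambda>p. E p i j) \<in> borel_measurable M" "i < n"
  shows "(\<lambda>p. mexp n (E p) i j) \<in> borel_measurable M"
proof (rule borel_measurable_LIMSEQ_metric[where f="\<lambda>N p. \<Sum>k<N. mpow n (E p) k i j / fact k"])
  fix N show "(\<lambda>p. \<Sum>k<N. mpow n (E p) k i j / fact k) \<in> borel_measurable M"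
    by (intro borel_measurable_sum borel_measurable_divide mpow_meas assms borel_measurable_const)
next
  fix p show "(\<lambda>N. \<Sum>k<N. mpow n (E p) k i j / fact k) \<longlonglongrightarrow> mexp n (E p) i j"
    unfolding mexp_def by (rule summable_LIMSEQ[OF mpow_summable[OF assms(2)]])
qed



lemma det_ne0_iff:
  "Determinant.det (Matrix.mat N N (\<lambda>(k,r). f k r)) \<noteq> (0::real) \<longleftrightarrow>
     (\<forall>g. (\<forall>k<N. (\<Sum>r<N. f k r * g r) = 0) \<longrightarrow> (\<forall>r<N. g r = 0))"
proof -
  let ?A = "Matrix.mat N N (\<lambda>(k,r). f k r)"
  have A: "?A \<in> carrier_mat N N" by simp
  have mv: "(?A *\<^sub>v v) $ k = (\<Sum>r<N. f k r * v $ r)" if "k < N" "v \<in> carrier_vec N" for k v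
    using that by (simp add: scalar_prod_def lessThan_atLeast0 row_def)
  show ?thesis
  proof
    assume d: "Determinant.det ?A \<noteq> 0"
    show "\<forall>g. (\<forall>k<N. (\<Sum>r<N. f k r * g r) = 0) \<longrightarrow> (\<forall>r<N. g r = 0)"
    proof (intro allI impI)
      fix g r assume z: "\<forall>k<N. (\<Sum>r<N. f k r * g r) = 0" and r: "r < N"
      let ?v = "vec N g"
      have "?A *\<^sub>v ?v = 0\<^sub>v N"
        by (rule eq_vecI) (use z mv in auto)
      then have "?v = 0\<^sub>v N" using d det_0_iff_vec_prod_zero[OF A] vec_carrier[of N g] by blast
      then show "g r = 0" using r by (metis index_vec index_zero_vec(1))
    qed
  next
    assume K: "\<forall>g. (\<forall>k<N. (\<Sum>r<N. f k r * g r) = 0) \<longrightarrow> (\<forall>r<N. g r = 0)"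
    show "Determinant.det ?A \<noteq> 0"
    proof
      assume "Determinant.det ?A = 0"
      then obtain v where v: "v \<in> carrier_vec N" "v \<noteq> 0\<^sub>v N" "?A *\<^sub>v v = 0\<^sub>v N"
        using det_0_iff_vec_prod_zero[OF A] by auto
      have "\<forall>k<N. (\<Sum>r<N. f k r * v $ r) = 0"
        using v mv by (metis index_zero_vec(1))
      then have "\<forall>r<N. v $ r = 0" using K by blast
      then have "v = 0\<^sub>v N" using v(1) by (intro eq_vecI) auto
      with v(2) show False by simp
    qed
  qed
qed

definition Pairs :: "nat \<Rightarrow> (nat \<times> nat) set" where
  "Pairs n = {(i,j). i \<le> j \<and> j < n}"

lemma Pairs_finite: "finite (Pairs n)"
  by (rule finite_subset[of _ "{..<n} \<times> {..<n}"]) (auto simp: Pairs_def)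

lemma Pairs_card: "2 * card (Pairs n) = n * (n + 1)"
proof (induction n)
  case 0 then show ?case by (simp add: Pairs_def)
next
  case (Suc n)
  have "Pairs (Suc n) = Pairs n \<union> (\<lambda>i. (i, n)) ` {..n}" by (auto simp: Pairs_def)
  moreover have "Pairs n \<inter> (\<lambda>i. (i, n)) ` {..n} = {}" by (auto simp: Pairs_def)
  moreover have "card ((\<lambda>i. (i, n)) ` {..n}) = Suc n" by (subst card_image) (auto simp: inj_on_def)
  ultimately have "card (Pairs (Suc n)) = card (Pairs n) + Suc n"
    using Pairs_finite by (simp add: card_Un_disjoint)
  then show ?case using Suc by simp
qed

lemma Pairs_bij: "\<exists>e. bij_betw e {..<m * (2*m+1)} (Pairs (2*m))"
proof -
  have "card (Pairs (2*m)) = m * (2*m+1)" using Pairs_card[of "2*m"] by simp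
  then show ?thesis using Pairs_finite by (intro finite_same_card_bij) auto
qed

definition Gam :: "nat \<times> nat \<Rightarrow> nat \<Rightarrow> nat \<Rightarrow> real" where
  "Gam q a c = (if (a,c) = q \<or> (c,a) = q then 1 else 0)"

definition alpha :: "nat \<Rightarrow> (nat \<Rightarrow> real) \<Rightarrow> (nat \<Rightarrow> nat \<Rightarrow> real) \<Rightarrow> nat \<Rightarrow> real" where
  "alpha n b Y a = (\<Sum>i<n. b i * Y i a)"

lemma swap4:
  "(\<Sum>i<n. \<Sum>j<n. \<Sum>l<n. \<Sum>a<n. f i j l a) = (\<Sum>a<n. \<Sum>l<n. \<Sum>i<n. \<Sum>j<(n::nat). f i j l a :: real)"
proof -
  have "(\<Sum>i<n. \<Sum>j<n. \<Sum>l<n. \<Sum>a<n. f i j l a) = (\<Sum>i<n. \<Sum>l<n. \<Sum>j<n. \<Sum>a<n. f i j l a)"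
    by (rule sum.cong[OF refl], rule sum.swap)
  also have "\<dots> = (\<Sum>i<n. \<Sum>l<n. \<Sum>a<n. \<Sum>j<n. f i j l a)"
    by (rule sum.cong[OF refl], rule sum.cong[OF refl], rule sum.swap)
  also have "\<dots> = (\<Sum>l<n. \<Sum>i<n. \<Sum>a<n. \<Sum>j<n. f i j l a)"
    by (rule sum.swap)
  also have "\<dots> = (\<Sum>l<n. \<Sum>a<n. \<Sum>i<n. \<Sum>j<n. f i j l a)"
    by (rule sum.cong[OF refl], rule sum.swap)
  also have "\<dots> = (\<Sum>a<n. \<Sum>l<n. \<Sum>i<n. \<Sum>j<n. f i j l a)"
    by (rule sum.swap)
  finally show ?thesis .
qed

lemma bilin_quad:
  "bilin n b (mmult n (mmult n X G) (mtrans X)) b =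
     (\<Sum>a<n. \<Sum>c<n. alpha n b X a * alpha n b X c * G a c)"
proof -
  have "bilin n b (mmult n (mmult n X G) (mtrans X)) b =
      (\<Sum>i<n. \<Sum>j<n. \<Sum>l<n. \<Sum>a<n. b i * X i a * G a l * X j l * b j)"
    unfolding bilin_def
  proof (intro sum.cong refl)
    fix i j
    show "b i * mmult n (mmult n X G) (mtrans X) i j * b j = (\<Sum>l<n. \<Sum>a<n. b i * X i a * G a l * X j l * b j)"
      unfolding mmult_def mtrans_def by (simp add: sum_distrib_left sum_distrib_right mult_ac)
  qed
  also have "\<dots> = (\<Sum>a<n. \<Sum>l<n. \<Sum>i<n. \<Sum>j<n. b i * X i a * G a l * X j l * b j)"
    by (rule swap4)
  also have "\<dots> = (\<Sum>a<n. \<Sum>c<n. alpha n b X a * alpha n b X c * G a c)"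
  proof (intro sum.cong refl)
    fix a l
    show "(\<Sum>i<n. \<Sum>j<n. b i * X i a * G a l * X j l * b j) = alpha n b X a * alpha n b X l * G a l"
      unfolding alpha_def sum_product unfolding sum_distrib_right by (intro sum.cong refl) (simp add: mult_ac)
  qed
  finally show ?thesis .
qed

lemma bilin_lin:
  "bilin n b X d = (\<Sum>a<n. alpha n b X a * d a)"
proof -
  have "bilin n b X d = (\<Sum>i<n. \<Sum>a<n. b i * X i a * d a)" unfolding bilin_def ..
  also have "\<dots> = (\<Sum>a<n. \<Sum>i<n. b i * X i a * d a)" by (rule sum.swap)
  also have "\<dots> = (\<Sum>a<n. alpha n b X a * d a)"
    unfolding alpha_def by (simp only: sum_distrib_right)
  finally show ?thesis .
qed

lemma sym_decomp:
  assumes "a < n" "c < n" "G a c = G c a"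
  shows "(\<Sum>q\<in>Pairs n. G (fst q) (snd q) * Gam q a c) = G a c"
proof -
  have g: "Gam q a c = (if q = (min a c, max a c) then 1 else 0)" if "q \<in> Pairs n" for q
  proof -
    define i j where "i = fst q" and "j = snd q"
    have q: "q = (i, j)" "i \<le> j" using that unfolding Pairs_def i_def j_def by auto
    have "((a,c) = q \<or> (c,a) = q) \<longleftrightarrow> q = (min a c, max a c)"
      unfolding q by (cases "a \<le> c") (use q(2) in \<open>auto simp: min_def max_def\<close>)
    then show ?thesis unfolding Gam_def by simp
  qed
  have mem: "(min a c, max a c) \<in> Pairs n" using assms by (auto simp: Pairs_def)
  have "(\<Sum>q\<in>Pairs n. G (fst q) (snd q) * Gam q a c) =
        (\<Sum>q\<in>Pairs n. if q = (min a c, max a c) then G (fst q) (snd q) else 0)"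
    by (rule sum.cong[OF refl]) (simp add: g)
  also have "\<dots> = G (min a c) (max a c)"
    using sum.delta[OF Pairs_finite, of "(min a c, max a c)" "\<lambda>q. G (fst q) (snd q)"] mem by simp
  also have "\<dots> = G a c" using assms(3) by (auto simp: min_def max_def)
  finally show ?thesis .
qed

lemma inj1:
  assumes e: "bij_betw e {..<N} (Pairs n)"
    and d: "Determinant.det (Matrix.mat N N (\<lambda>(k,r). \<Sum>a<n. \<Sum>c<n. alpha n b (X k) a * alpha n b (X k) c * Gam (e r) a c)) \<noteq> 0"
  shows "inj_on (\<lambda>G. map (\<lambda>k. bilin n b (mmult n (mmult n (X k) G) (mtrans (X k))) b) [0..<N]) (sym_mats n)"
proof (rule inj_onI)
  fix G1 G2 assume G1: "G1 \<in> sym_mats n" and G2: "G2 \<in> sym_mats n"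
    and eq: "map (\<lambda>k. bilin n b (mmult n (mmult n (X k) G1) (mtrans (X k))) b) [0..<N] =
             map (\<lambda>k. bilin n b (mmult n (mmult n (X k) G2) (mtrans (X k))) b) [0..<N]"
  define D where "D a c = G1 a c - G2 a c" for a c
  have Dsym: "D a c = D c a" for a c using G1 G2 unfolding D_def sym_mats_def by auto
  define g where "g r = D (fst (e r)) (snd (e r))" for r
  have K: "\<forall>g. (\<forall>k<N. (\<Sum>r<N. (\<Sum>a<n. \<Sum>c<n. alpha n b (X k) a * alpha n b (X k) c * Gam (e r) a c) * g r) = 0) \<longrightarrow> (\<forall>r<N. g r = 0)"
    using d det_ne0_iff[of N "\<lambda>k r. \<Sum>a<n. \<Sum>c<n. alpha n b (X k) a * alpha n b (X k) c * Gam (e r) a c"] by simp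
  have "\<forall>k<N. (\<Sum>r<N. (\<Sum>a<n. \<Sum>c<n. alpha n b (X k) a * alpha n b (X k) c * Gam (e r) a c) * g r) = 0"
  proof (intro allI impI)
    fix k assume k: "k < N"
    have e1: "bilin n b (mmult n (mmult n (X k) G1) (mtrans (X k))) b = bilin n b (mmult n (mmult n (X k) G2) (mtrans (X k))) b"
      using eq k by (simp add: map_eq_conv)
    have "(\<Sum>r<N. (\<Sum>a<n. \<Sum>c<n. alpha n b (X k) a * alpha n b (X k) c * Gam (e r) a c) * g r) =
          (\<Sum>a<n. \<Sum>c<n. alpha n b (X k) a * alpha n b (X k) c * (\<Sum>r<N. g r * Gam (e r) a c))"
    proof -
      have "(\<Sum>r<N. (\<Sum>a<n. \<Sum>c<n. alpha n b (X k) a * alpha n b (X k) c * Gam (e r) a c) * g r) =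
            (\<Sum>r<N. \<Sum>a<n. \<Sum>c<n. alpha n b (X k) a * alpha n b (X k) c * Gam (e r) a c * g r)"
        by (simp only: sum_distrib_right)
      also have "\<dots> = (\<Sum>a<n. \<Sum>r<N. \<Sum>c<n. alpha n b (X k) a * alpha n b (X k) c * Gam (e r) a c * g r)"
        by (rule sum.swap)
      also have "\<dots> = (\<Sum>a<n. \<Sum>c<n. \<Sum>r<N. alpha n b (X k) a * alpha n b (X k) c * Gam (e r) a c * g r)"
        by (rule sum.cong[OF refl], rule sum.swap)
      also have "\<dots> = (\<Sum>a<n. \<Sum>c<n. alpha n b (X k) a * alpha n b (X k) c * (\<Sum>r<N. g r * Gam (e r) a c))"
        by (rule sum.cong[OF refl], rule sum.cong[OF refl]) (simp add: sum_distrib_left mult_ac)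
      finally show ?thesis .
    qed
    also have "\<dots> = (\<Sum>a<n. \<Sum>c<n. alpha n b (X k) a * alpha n b (X k) c * D a c)"
    proof (intro sum.cong refl)
      fix a c assume "a \<in> {..<n}" "c \<in> {..<n}"
      then have "(\<Sum>r<N. g r * Gam (e r) a c) = (\<Sum>q\<in>Pairs n. D (fst q) (snd q) * Gam q a c)"
        unfolding g_def using sum.reindex_bij_betw[OF e, of "\<lambda>q. D (fst q) (snd q) * Gam q a c"] by simp
      also have "\<dots> = D a c" using \<open>a \<in> _\<close> \<open>c \<in> _\<close> Dsym by (intro sym_decomp) auto
      finally show "alpha n b (X k) a * alpha n b (X k) c * (\<Sum>r<N. g r * Gam (e r) a c) =
                    alpha n b (X k) a * alpha n b (X k) c * D a c" by simp
    qed
    also have "\<dots> = bilin n b (mmult n (mmult n (X k) G1) (mtrans (X k))) b - bilin n b (mmult n (mmult n (X k) G2) (mtrans (X k))) b"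
      unfolding bilin_quad D_def by (simp add: right_diff_distrib sum_subtractf)
    also have "\<dots> = 0" using e1 by simp
    finally show "(\<Sum>r<N. (\<Sum>a<n. \<Sum>c<n. alpha n b (X k) a * alpha n b (X k) c * Gam (e r) a c) * g r) = 0" .
  qed
  then have g0: "\<forall>r<N. g r = 0" using K by blast
  show "G1 = G2"
  proof (intro ext)
    fix a c
    show "G1 a c = G2 a c"
    proof (cases "a < n \<and> c < n")
      case True
      then have "(min a c, max a c) \<in> Pairs n" by (auto simp: Pairs_def)
      then have "(min a c, max a c) \<in> e ` {..<N}" using bij_betw_imp_surj_on[OF e] by simp
      then obtain r where r: "r < N" "e r = (min a c, max a c)" by force
      have "D (min a c) (max a c) = 0" using g0 r unfolding g_def by force
      then have "D a c = 0" using Dsym[of a c] by (cases "a \<le> c") (auto simp: min_def max_def)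
      then show ?thesis unfolding D_def by simp
    next
      case False
      then show ?thesis using G1 G2 unfolding sym_mats_def by auto
    qed
  qed
qed

lemma inj2:
  assumes d: "Determinant.det (Matrix.mat n n (\<lambda>(k,a). alpha n b (X k) a)) \<noteq> 0"
  shows "inj_on (\<lambda>d. map (\<lambda>k. bilin n b (X k) d) [0..<n]) (vecs n)"
proof (rule inj_onI)
  fix d1 d2 assume d1: "d1 \<in> vecs n" and d2: "d2 \<in> vecs n"
    and eq: "map (\<lambda>k. bilin n b (X k) d1) [0..<n] = map (\<lambda>k. bilin n b (X k) d2) [0..<n]"
  have K: "\<forall>g. (\<forall>k<n. (\<Sum>r<n. alpha n b (X k) r * g r) = 0) \<longrightarrow> (\<forall>r<n. g r = 0)"
    using d det_ne0_iff[of n "\<lambda>k a. alpha n b (X k) a"] by simp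
  have "\<forall>k<n. (\<Sum>r<n. alpha n b (X k) r * (d1 r - d2 r)) = 0"
  proof (intro allI impI)
    fix k assume "k < n"
    then have "bilin n b (X k) d1 = bilin n b (X k) d2" using eq by (simp add: map_eq_conv)
    then show "(\<Sum>r<n. alpha n b (X k) r * (d1 r - d2 r)) = 0"
      unfolding bilin_lin by (simp add: right_diff_distrib sum_subtractf)
  qed
  then have "\<forall>r<n. d1 r - d2 r = 0" using K[rule_format, of "\<lambda>r. d1 r - d2 r"] by blast
  then have r0: "\<forall>r<n. d1 r = d2 r" by simp
  show "d1 = d2"
  proof (rule ext)
    fix x show "d1 x = d2 x"
    proof (cases "x < n")
      case True then show ?thesis using r0 by blast
    next
      case False then show ?thesis using d1 d2 unfolding vecs_def by auto
    qed
  qed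
qed



definition hw :: "nat \<Rightarrow> real" where "hw n = 1 / sqrt (real n)"
definition hv :: "nat \<Rightarrow> (nat \<Rightarrow> real) \<Rightarrow> nat \<Rightarrow> real" where "hv n b i = b i - hw n"
definition hvv :: "nat \<Rightarrow> (nat \<Rightarrow> real) \<Rightarrow> real" where "hvv n b = (\<Sum>i<n. (hv n b i)^2)"
definition hk :: "nat \<Rightarrow> (nat \<Rightarrow> real) \<Rightarrow> real" where "hk n b = (if hvv n b = 0 then 0 else 2 / hvv n b)"
definition kd :: "nat \<Rightarrow> nat \<Rightarrow> real" where "kd i j = (if i = j then 1 else 0)"
definition HH :: "nat \<Rightarrow> (nat \<Rightarrow> real) \<Rightarrow> nat \<Rightarrow> nat \<Rightarrow> real" where
  "HH n b i j = kd i j - hk n b * hv n b i * hv n b j"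

lemma delta_sum1: "i < n \<Longrightarrow> (\<Sum>l<n. kd i l * f l) = (f i :: real)"
proof -
  assume "i < n"
  have "(\<Sum>l<n. kd i l * f l) = (\<Sum>l<n. if i = l then f l else 0)"
    by (rule sum.cong) (auto simp: kd_def)
  then show ?thesis using \<open>i < n\<close> by simp
qed

lemma delta_sum2: "j < n \<Longrightarrow> (\<Sum>l<n. f l * kd l j) = (f j :: real)"
proof -
  assume "j < n"
  have "(\<Sum>l<n. f l * kd l j) = (\<Sum>l<n. if l = j then f l else 0)"
    by (rule sum.cong) (auto simp: kd_def)
  then show ?thesis using \<open>j < n\<close> by simp
qed

lemma kd_sym: "kd i j = kd j i" by (auto simp: kd_def)

lemma HH_sym: "HH n b i j = HH n b j i"
  unfolding HH_def by (auto simp: mult_ac kd_sym)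

lemma hk_hvv: "hk n b * hk n b * hvv n b = 2 * hk n b"
  unfolding hk_def by (auto simp: field_simps power2_eq_square)

lemma HH_orth:
  assumes "i < n" "j < n"
  shows "(\<Sum>l<n. HH n b i l * HH n b l j) = kd i j"
proof -
  let ?k = "hk n b" and ?v = "hv n b"
  have pt: "HH n b i l * HH n b l j = kd i l * kd l j - ?k * ?v j * (kd i l * ?v l)
     - ?k * ?v i * (?v l * kd l j) + ?k * ?k * ?v i * ?v j * (?v l)^2" for l
    unfolding HH_def by (simp add: algebra_simps power2_eq_square)
  have "(\<Sum>l<n. HH n b i l * HH n b l j) =
     (\<Sum>l<n. kd i l * kd l j)
     - ?k * ?v j * (\<Sum>l<n. kd i l * ?v l)
     - ?k * ?v i * (\<Sum>l<n. ?v l * kd l j)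
     + ?k * ?k * ?v i * ?v j * (\<Sum>l<n. (?v l)^2)"
    unfolding pt by (simp add: sum.distrib sum_subtractf sum_distrib_left)
  also have "\<dots> = kd i j - 2 * ?k * ?v i * ?v j + ?k * ?k * hvv n b * ?v i * ?v j"
    using assms by (simp only: delta_sum1 delta_sum2) (simp add: hvv_def algebra_simps)
  also have "\<dots> = kd i j"
  proof -
    have e: "?k * ?k * hvv n b * ?v i * ?v j = 2 * ?k * ?v i * ?v j" using hk_hvv[of n b] by simp
    show ?thesis by (simp only: e)
  qed
  finally show ?thesis .
qed

lemma HH_b:
  assumes n: "n > 0" and b: "(\<Sum>i<n. (b i)^2) = 1" and c: "c < n"
  shows "(\<Sum>i<n. b i * HH n b i c) = hw n"
proof -
  let ?k = "hk n b" and ?v = "hv n b" and ?w = "hw n"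
  have ww: "(\<Sum>i<n. ?w^2) = 1" using n by (simp add: hw_def power_divide)
  define S where "S = (\<Sum>i<n. b i)"
  have bv: "(\<Sum>i<n. b i * ?v i) = 1 - ?w * S"
  proof -
    have pt: "b i * ?v i = (b i)^2 - ?w * b i" for i unfolding hv_def by (simp add: algebra_simps power2_eq_square)
    have "(\<Sum>i<n. b i * ?v i) = (\<Sum>i<n. (b i)^2) - ?w * S"
      unfolding pt S_def by (simp only: sum_subtractf sum_distrib_left)
    then show ?thesis using b by simp
  qed
  have vv: "hvv n b = 2 - 2 * ?w * S"
  proof -
    have "hvv n b = (\<Sum>i<n. (b i)^2) - 2 * ?w * (\<Sum>i<n. b i) + (\<Sum>i<n. ?w^2)"
    proof -
      have pt: "(?v i)^2 = (b i)^2 - 2 * ?w * b i + ?w^2" for i unfolding hv_def by (simp add: power2_diff)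
      show ?thesis unfolding hvv_def pt by (simp only: sum.distrib sum_subtractf sum_distrib_left)
    qed
    then show ?thesis using b ww S_def by simp
  qed
  have pt: "b i * HH n b i c = b i * kd i c - ?k * ?v c * (b i * ?v i)" for i
    unfolding HH_def by (simp add: algebra_simps)
  have "(\<Sum>i<n. b i * HH n b i c) = b c - ?k * ?v c * (\<Sum>i<n. b i * ?v i)"
    unfolding pt using c by (simp add: sum_subtractf sum_distrib_left delta_sum2)
  also have "\<dots> = ?w"
  proof (cases "hvv n b = 0")
    case True
    have "\<forall>i\<in>{..<n}. (?v i)^2 = 0"
      using True unfolding hvv_def by (subst sum_nonneg_eq_0_iff[symmetric]) auto
    then have "?v c = 0" using c by auto
    then show ?thesis unfolding hv_def by simp
  next
    case False
    then have "?k * (\<Sum>i<n. b i * ?v i) = 1" unfolding hk_def bv using vv by (simp add: field_simps)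
    then show ?thesis unfolding hv_def by (simp add: algebra_simps)
  qed
  finally show ?thesis .
qed

definition lam :: "nat \<Rightarrow> real" where "lam a = 2 ^ a"

lemma lam_inj: "inj_on lam A"
  unfolding lam_def by (auto simp: inj_on_def)

lemma lam_pair_inj: "inj_on (\<lambda>q. lam (fst q) + lam (snd q)) (Pairs n)"
proof (rule inj_onI)
  fix q q' assume q: "q \<in> Pairs n" and q': "q' \<in> Pairs n"
    and eq: "lam (fst q) + lam (snd q) = lam (fst q') + lam (snd q')"
  define i j i' j' where "i = fst q" and "j = snd q" and "i' = fst q'" and "j' = snd q'"
  have ij: "i \<le> j" "i' \<le> j'" using q q' unfolding Pairs_def i_def j_def i'_def j'_def by auto
  have bnd: "(2::real)^y < 2^x + 2^y \<and> (2::real)^x + 2^y \<le> 2^(Suc y)" if "x \<le> y" for x y :: nat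
  proof -
    have "(2::real)^x \<le> 2^y" using that by (rule power_increasing) auto
    then show ?thesis by auto
  qed
  have e2: "(2::real)^i + 2^j = 2^i' + 2^j'" using eq unfolding lam_def i_def j_def i'_def j'_def .
  have "j = j'"
  proof (rule ccontr)
    assume "j \<noteq> j'"
    then consider "j < j'" | "j' < j" by linarith
    then show False
    proof cases
      case 1
      then have "(2::real)^(Suc j) \<le> 2^j'" by (intro power_increasing) auto
      then show False using bnd[OF ij(1)] bnd[OF ij(2)] e2 by linarith
    next
      case 2
      then have "(2::real)^(Suc j') \<le> 2^j" by (intro power_increasing) auto
      then show False using bnd[OF ij(1)] bnd[OF ij(2)] e2 by linarith
    qed
  qed
  then have "(2::real)^i = 2^i'" using e2 by simp
  then have "i = i'" by simp
  then show "q = q'" using \<open>j = j'\<close> unfolding i_def j_def i'_def j'_def by (simp add: prod_eq_iff)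
qed

lemma swap3: "(\<Sum>l<n. \<Sum>a<n. \<Sum>c<(n::nat). f l a c) = (\<Sum>a<n. \<Sum>c<n. \<Sum>l<n. f l a c :: real)"
proof -
  have "(\<Sum>l<n. \<Sum>a<n. \<Sum>c<n. f l a c) = (\<Sum>a<n. \<Sum>l<n. \<Sum>c<n. f l a c)" by (rule sum.swap)
  also have "\<dots> = (\<Sum>a<n. \<Sum>c<n. \<Sum>l<n. f l a c)" by (rule sum.cong[OF refl], rule sum.swap)
  finally show ?thesis .
qed

lemma mpow_conj:
  assumes orth: "\<And>i j. i < n \<Longrightarrow> j < n \<Longrightarrow> (\<Sum>l<n. H i l * H l j) = kd i j"
  shows "i < n \<Longrightarrow> j < n \<Longrightarrow> mpow n (\<lambda>i j. \<Sum>a<n. H i a * d a * H a j) k i j = (\<Sum>a<n. H i a * d a ^ k * H a j)"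
proof (induction k arbitrary: i j)
  case 0
  then show ?case using orth[OF 0] by (simp add: mident_def kd_def)
next
  case (Suc k)
  have "mpow n (\<lambda>i j. \<Sum>a<n. H i a * d a * H a j) (Suc k) i j =
        (\<Sum>l<n. (\<Sum>a<n. H i a * d a * H a l) * (\<Sum>c<n. H l c * d c ^ k * H c j))"
    using Suc by (simp add: mmult_def)
  also have "\<dots> = (\<Sum>l<n. \<Sum>a<n. \<Sum>c<n. H i a * d a * (H a l * H l c) * d c ^ k * H c j)"
    by (simp add: sum_product mult_ac)
  also have "\<dots> = (\<Sum>a<n. \<Sum>c<n. \<Sum>l<n. H i a * d a * (H a l * H l c) * d c ^ k * H c j)"
    by (rule swap3)
  also have "\<dots> = (\<Sum>a<n. \<Sum>c<n. H i a * d a * kd a c * (d c ^ k * H c j))"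
  proof (rule sum.cong[OF refl], rule sum.cong[OF refl])
    fix a c assume "a \<in> {..<n}" "c \<in> {..<n}"
    then have "(\<Sum>l<n. H i a * d a * (H a l * H l c) * d c ^ k * H c j) = H i a * d a * (\<Sum>l<n. H a l * H l c) * (d c ^ k * H c j)"
      by (simp add: sum_distrib_left sum_distrib_right mult_ac)
    also have "\<dots> = H i a * d a * kd a c * (d c ^ k * H c j)" using orth \<open>a \<in> _\<close> \<open>c \<in> _\<close> by simp
    finally show "(\<Sum>l<n. H i a * d a * (H a l * H l c) * d c ^ k * H c j) = H i a * d a * kd a c * (d c ^ k * H c j)" .
  qed
  also have "\<dots> = (\<Sum>a<n. H i a * d a ^ Suc k * H a j)"
  proof (rule sum.cong[OF refl])
    fix a assume "a \<in> {..<n}"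
    have "(\<Sum>c<n. H i a * d a * kd a c * (d c ^ k * H c j)) = H i a * d a * (\<Sum>c<n. kd a c * (d c ^ k * H c j))"
      by (simp add: sum_distrib_left mult_ac)
    also have "\<dots> = H i a * d a * (d a ^ k * H a j)" using \<open>a \<in> _\<close> by (simp add: delta_sum1)
    finally show "(\<Sum>c<n. H i a * d a * kd a c * (d c ^ k * H c j)) = H i a * d a ^ Suc k * H a j"
      by (simp add: mult_ac)
  qed
  finally show ?case .
qed

lemma mexp_conj:
  assumes orth: "\<And>i j. i < n \<Longrightarrow> j < n \<Longrightarrow> (\<Sum>l<n. H i l * H l j) = kd i j"
    and ij: "i < n" "j < n"
  shows "mexp n (\<lambda>i j. \<Sum>a<n. H i a * d a * H a j) i j = (\<Sum>a<n. H i a * exp (d a) * H a j)"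
proof -
  have "(\<lambda>k. mpow n (\<lambda>i j. \<Sum>a<n. H i a * d a * H a j) k i j / fact k) =
        (\<lambda>k. \<Sum>a<n. H i a * (d a ^ k /\<^sub>R fact k) * H a j)"
    using mpow_conj[OF orth ij] by (simp add: sum_divide_distrib field_simps)
  moreover have "(\<lambda>k. \<Sum>a<n. H i a * (d a ^ k /\<^sub>R fact k) * H a j) sums (\<Sum>a<n. H i a * exp (d a) * H a j)"
    by (intro sums_sum sums_mult sums_mult2 exp_converges)
  ultimately show ?thesis unfolding mexp_def by (simp add: sums_iff)
qed

lemma mpow_agree:
  assumes "\<And>i j. i < n \<Longrightarrow> j < n \<Longrightarrow> A i j = A' i j"
  shows "i < n \<Longrightarrow> mpow n A k i j = mpow n A' k i j"
proof (induction k arbitrary: i j)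
  case 0 then show ?case by simp
next
  case (Suc k) then show ?case using assms by (simp add: mmult_def)
qed

lemma mexp_agree:
  assumes "\<And>i j. i < n \<Longrightarrow> j < n \<Longrightarrow> A i j = A' i j" "i < n"
  shows "mexp n A i j = mexp n A' i j"
  unfolding mexp_def using mpow_agree[OF assms(1) assms(2)] by simp



lemma alpha_X:
  assumes n: "n > 0" and b: "(\<Sum>i<n. (b i)^2) = 1"
    and Y: "\<And>i j. i < n \<Longrightarrow> j < n \<Longrightarrow> Y i j = (\<Sum>a<n. HH n b i a * E a * HH n b a j)"
    and c: "c < n"
  shows "alpha n b Y c = hw n * (\<Sum>a<n. E a * HH n b a c)"
proof -
  have "alpha n b Y c = (\<Sum>i<n. \<Sum>a<n. b i * HH n b i a * E a * HH n b a c)"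
    unfolding alpha_def using Y c by (simp add: sum_distrib_left mult_ac)
  also have "\<dots> = (\<Sum>a<n. \<Sum>i<n. b i * HH n b i a * E a * HH n b a c)" by (rule sum.swap)
  also have "\<dots> = (\<Sum>a<n. (\<Sum>i<n. b i * HH n b i a) * (E a * HH n b a c))"
    by (rule sum.cong[OF refl]) (simp add: sum_distrib_left sum_distrib_right mult_ac)
  also have "\<dots> = (\<Sum>a<n. hw n * (E a * HH n b a c))"
    by (rule sum.cong[OF refl]) (simp add: HH_b[OF n b])
  also have "\<dots> = hw n * (\<Sum>a<n. E a * HH n b a c)" by (simp add: sum_distrib_left)
  finally show ?thesis .
qed

lemma hw_nz: "n > 0 \<Longrightarrow> hw n \<noteq> 0"
  unfolding hw_def by simp

lemma wit2:
  assumes n: "n > 0" and b: "(\<Sum>i<n. (b i)^2) = 1" and t: "inj_on t {..<n}"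
    and X: "\<And>k i j. i < n \<Longrightarrow> j < n \<Longrightarrow> X k i j = (\<Sum>a<n. HH n b i a * exp (t k * lam a) * HH n b a j)"
  shows "Determinant.det (Matrix.mat n n (\<lambda>(k,a). alpha n b (X k) a)) \<noteq> 0"
  unfolding det_ne0_iff
proof (intro allI impI)
  fix g r assume z: "\<forall>k<n. (\<Sum>r<n. alpha n b (X k) r * g r) = 0" and r: "r < n"
  define c where "c a = hw n * (\<Sum>r<n. HH n b a r * g r)" for a
  have "c a = 0" if a: "a \<in> {..<n}" for a
  proof (rule exp_sum_zero[where \<mu>=lam and S="t ` {..<n}" and P="{..<n}"])
    show "inj_on lam {..<n}" by (rule lam_inj)
    show "card {..<n} \<le> card (t ` {..<n})" using t by (simp add: card_image)
    fix s assume "s \<in> t ` {..<n}"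
    then obtain k where k: "k < n" "s = t k" by auto
    have "0 = (\<Sum>r<n. alpha n b (X k) r * g r)" using z k by simp
    also have "\<dots> = (\<Sum>r<n. hw n * (\<Sum>a<n. exp (t k * lam a) * HH n b a r) * g r)"
      by (rule sum.cong[OF refl]) (simp add: alpha_X[OF n b X])
    also have "\<dots> = (\<Sum>r<n. \<Sum>a<n. hw n * exp (t k * lam a) * HH n b a r * g r)"
      by (simp add: sum_distrib_left sum_distrib_right mult_ac)
    also have "\<dots> = (\<Sum>a<n. \<Sum>r<n. hw n * exp (t k * lam a) * HH n b a r * g r)" by (rule sum.swap)
    also have "\<dots> = (\<Sum>a<n. c a * exp (lam a * s))"
      unfolding c_def k by (simp add: sum_distrib_left sum_distrib_right mult_ac)
    finally show "(\<Sum>a<n. c a * exp (lam a * s)) = 0" by simp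
  qed (use a in auto)
  then have hz: "(\<Sum>r<n. HH n b a r * g r) = 0" if "a < n" for a
    using that hw_nz[OF n] unfolding c_def by auto
  have "g r = (\<Sum>l<n. kd r l * g l)" using r by (simp add: delta_sum1)
  also have "\<dots> = (\<Sum>l<n. \<Sum>a<n. HH n b r a * HH n b a l * g l)"
  proof (rule sum.cong[OF refl])
    fix l assume "l \<in> {..<n}"
    then have "kd r l = (\<Sum>a<n. HH n b r a * HH n b a l)" using HH_orth[OF r, of l] by simp
    then show "kd r l * g l = (\<Sum>a<n. HH n b r a * HH n b a l * g l)" by (simp add: sum_distrib_right)
  qed
  also have "\<dots> = (\<Sum>a<n. \<Sum>l<n. HH n b r a * HH n b a l * g l)" by (rule sum.swap)
  also have "\<dots> = (\<Sum>a<n. HH n b r a * (\<Sum>l<n. HH n b a l * g l))"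
    by (simp add: sum_distrib_left mult_ac)
  also have "\<dots> = 0" using hz by simp
  finally show "g r = 0" .
qed

lemma quad_swap:
  "(\<Sum>r<N. (\<Sum>a<n. \<Sum>c<n. A a * A c * Gam (e r) a c) * g r) =
   (\<Sum>a<n. \<Sum>c<n. A a * A c * (\<Sum>r<N. g r * Gam (e r) a c))"
proof -
  have "(\<Sum>r<N. (\<Sum>a<n. \<Sum>c<n. A a * A c * Gam (e r) a c) * g r) =
        (\<Sum>r<N. \<Sum>a<n. \<Sum>c<n. A a * A c * Gam (e r) a c * g r)"
    by (simp only: sum_distrib_right)
  also have "\<dots> = (\<Sum>a<n. \<Sum>r<N. \<Sum>c<n. A a * A c * Gam (e r) a c * g r)"
    by (rule sum.swap)
  also have "\<dots> = (\<Sum>a<n. \<Sum>c<n. \<Sum>r<N. A a * A c * Gam (e r) a c * g r)"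
    by (rule sum.cong[OF refl], rule sum.swap)
  also have "\<dots> = (\<Sum>a<n. \<Sum>c<n. A a * A c * (\<Sum>r<N. g r * Gam (e r) a c))"
    by (rule sum.cong[OF refl], rule sum.cong[OF refl]) (simp add: sum_distrib_left mult_ac)
  finally show ?thesis .
qed

lemma swap22:
  "(\<Sum>i\<in>A. \<Sum>j\<in>B. \<Sum>k\<in>C. \<Sum>l\<in>D. f i j k l) = (\<Sum>k\<in>C. \<Sum>l\<in>D. \<Sum>i\<in>A. \<Sum>j\<in>B. f i j k l :: real)"
proof -
  have "(\<Sum>i\<in>A. \<Sum>j\<in>B. \<Sum>k\<in>C. \<Sum>l\<in>D. f i j k l) = (\<Sum>i\<in>A. \<Sum>k\<in>C. \<Sum>j\<in>B. \<Sum>l\<in>D. f i j k l)"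
    by (rule sum.cong[OF refl], rule sum.swap)
  also have "\<dots> = (\<Sum>i\<in>A. \<Sum>k\<in>C. \<Sum>l\<in>D. \<Sum>j\<in>B. f i j k l)"
    by (rule sum.cong[OF refl], rule sum.cong[OF refl], rule sum.swap)
  also have "\<dots> = (\<Sum>k\<in>C. \<Sum>i\<in>A. \<Sum>l\<in>D. \<Sum>j\<in>B. f i j k l)"
    by (rule sum.swap)
  also have "\<dots> = (\<Sum>k\<in>C. \<Sum>l\<in>D. \<Sum>i\<in>A. \<Sum>j\<in>B. f i j k l)"
    by (rule sum.cong[OF refl], rule sum.swap)
  finally show ?thesis .
qed

lemma HH_inv:
  assumes ac: "a < n" "c < n"
  shows "(\<Sum>p<n. \<Sum>q<n. HH n b a p * HH n b c q * (\<Sum>a'<n. \<Sum>c'<n. HH n b p a' * HH n b q c' * D a' c')) = D a c"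
proof -
  let ?H = "HH n b"
  have "(\<Sum>p<n. \<Sum>q<n. ?H a p * ?H c q * (\<Sum>a'<n. \<Sum>c'<n. ?H p a' * ?H q c' * D a' c')) =
        (\<Sum>p<n. \<Sum>q<n. \<Sum>a'<n. \<Sum>c'<n. (?H a p * ?H p a') * (?H c q * ?H q c') * D a' c')"
    by (rule sum.cong[OF refl], rule sum.cong[OF refl]) (simp add: sum_distrib_left mult_ac)
  also have "\<dots> = (\<Sum>a'<n. \<Sum>c'<n. \<Sum>p<n. \<Sum>q<n. (?H a p * ?H p a') * (?H c q * ?H q c') * D a' c')"
    by (rule swap22)
  also have "\<dots> = (\<Sum>a'<n. \<Sum>c'<n. kd a a' * (kd c c' * D a' c'))"
  proof (rule sum.cong[OF refl], rule sum.cong[OF refl])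
    fix a' c' assume "a' \<in> {..<n}" "c' \<in> {..<n}"
    have "(\<Sum>p<n. \<Sum>q<n. (?H a p * ?H p a') * (?H c q * ?H q c') * D a' c') =
          (\<Sum>p<n. ?H a p * ?H p a') * (\<Sum>q<n. ?H c q * ?H q c') * D a' c'"
      unfolding sum_product by (simp only: sum_distrib_right)
    also have "\<dots> = kd a a' * (kd c c' * D a' c')"
      using ac \<open>a' \<in> _\<close> \<open>c' \<in> _\<close> by (simp add: HH_orth)
    finally show "(\<Sum>p<n. \<Sum>q<n. (?H a p * ?H p a') * (?H c q * ?H q c') * D a' c') = kd a a' * (kd c c' * D a' c')" .
  qed
  also have "\<dots> = (\<Sum>a'<n. kd a a' * (\<Sum>c'<n. kd c c' * D a' c'))"
    by (simp add: sum_distrib_left)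
  also have "\<dots> = D a c" using ac by (simp add: delta_sum1)
  finally show ?thesis .
qed

lemma fiber_sum:
  assumes q: "q \<in> Pairs n"
  shows "(\<Sum>x\<in>{x \<in> {..<n} \<times> {..<n}. (min (fst x) (snd x), max (fst x) (snd x)) = q}. F x) =
         (if fst q = snd q then F q else F q + F (snd q, fst q))"
proof -
  have q2: "fst q \<le> snd q" "snd q < n" using q by (auto simp: Pairs_def)
  have "{x \<in> {..<n} \<times> {..<n}. (min (fst x) (snd x), max (fst x) (snd x)) = q} = {q, (snd q, fst q)}"
    using q2 by (auto simp: min_def max_def prod_eq_iff split: if_splits)
  then show ?thesis by (cases q) auto
qed

lemma Gam_sym: "Gam q a c = Gam q c a"
  unfolding Gam_def by auto

lemma wit1:
  assumes n: "n > 0" and b: "(\<Sum>i<n. (b i)^2) = 1" and e: "bij_betw e {..<N} (Pairs n)"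
    and t: "inj_on t {..<N}"
    and X: "\<And>k i j. i < n \<Longrightarrow> j < n \<Longrightarrow> X k i j = (\<Sum>a<n. HH n b i a * exp (t k * lam a) * HH n b a j)"
  shows "Determinant.det (Matrix.mat N N (\<lambda>(k,r). \<Sum>a<n. \<Sum>c<n. alpha n b (X k) a * alpha n b (X k) c * Gam (e r) a c)) \<noteq> 0"
  unfolding det_ne0_iff
proof (intro allI impI)
  fix g r
  assume z: "\<forall>k<N. (\<Sum>r<N. (\<Sum>a<n. \<Sum>c<n. alpha n b (X k) a * alpha n b (X k) c * Gam (e r) a c) * g r) = 0"
    and r: "r < N"
  let ?H = "HH n b"
  define D where "D a c = (\<Sum>r<N. g r * Gam (e r) a c)" for a c
  have Dsym: "D a c = D c a" for a c unfolding D_def by (simp add: Gam_sym[of _ a c])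
  define P where "P p q = (\<Sum>a<n. \<Sum>c<n. ?H p a * ?H q c * D a c)" for p q
  have Psym: "P p q = P q p" for p q
  proof -
    have "P q p = (\<Sum>c<n. \<Sum>a<n. ?H q a * ?H p c * D a c)" unfolding P_def by (rule sum.swap)
    also have "\<dots> = P p q" unfolding P_def
      by (rule sum.cong[OF refl], rule sum.cong[OF refl]) (simp add: Dsym mult_ac)
    finally show ?thesis by simp
  qed
  define \<mu> where "\<mu> q = lam (fst q) + lam (snd q)" for q
  define fib where "fib q = {x \<in> {..<n} \<times> {..<n}. (min (fst x) (snd x), max (fst x) (snd x)) = q}" for q
  define cc where "cc q = hw n * hw n * (\<Sum>x\<in>fib q. P (fst x) (snd x))" for q
  have cc0: "cc q = 0" if q: "q \<in> Pairs n" for q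
  proof (rule exp_sum_zero[where \<mu>=\<mu> and S="t ` {..<N}" and P="Pairs n"])
    show "finite (Pairs n)" by (rule Pairs_finite)
    show "inj_on \<mu> (Pairs n)" unfolding \<mu>_def by (rule lam_pair_inj)
    show "finite (t ` {..<N})" by simp
    show "card (Pairs n) \<le> card (t ` {..<N})" using t bij_betw_same_card[OF e] by (simp add: card_image)
    show "q \<in> Pairs n" by (rule q)
    fix s assume "s \<in> t ` {..<N}"
    then obtain k where k: "k < N" "s = t k" by auto
    define E where "E p = exp (t k * lam p)" for p
    have al: "alpha n b (X k) a = (\<Sum>p<n. hw n * (E p * ?H p a))" if "a < n" for a
      using alpha_X[OF n b _ that, of "X k" E] X unfolding E_def by (simp add: sum_distrib_left)
    define F where "F x = hw n * hw n * (E (fst x) * E (snd x)) * P (fst x) (snd x)" for x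
    have "0 = (\<Sum>r<N. (\<Sum>a<n. \<Sum>c<n. alpha n b (X k) a * alpha n b (X k) c * Gam (e r) a c) * g r)"
      using z k by simp
    also have "\<dots> = (\<Sum>a<n. \<Sum>c<n. alpha n b (X k) a * alpha n b (X k) c * D a c)"
      unfolding D_def by (rule quad_swap)
    also have "\<dots> = (\<Sum>a<n. \<Sum>c<n. \<Sum>p<n. \<Sum>q<n. hw n * hw n * (E p * E q) * (?H p a * ?H q c * D a c))"
    proof (rule sum.cong[OF refl], rule sum.cong[OF refl])
      fix a c assume "a \<in> {..<n}" "c \<in> {..<n}"
      then have "alpha n b (X k) a * alpha n b (X k) c * D a c =
          (\<Sum>p<n. hw n * (E p * ?H p a)) * (\<Sum>q<n. hw n * (E q * ?H q c)) * D a c"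
        by (simp add: al)
      also have "\<dots> = (\<Sum>p<n. \<Sum>q<n. hw n * (E p * ?H p a) * (hw n * (E q * ?H q c)) * D a c)"
        unfolding sum_product by (simp only: sum_distrib_right)
      also have "\<dots> = (\<Sum>p<n. \<Sum>q<n. hw n * hw n * (E p * E q) * (?H p a * ?H q c * D a c))"
        by (rule sum.cong[OF refl], rule sum.cong[OF refl]) (simp add: mult_ac)
      finally show "alpha n b (X k) a * alpha n b (X k) c * D a c =
          (\<Sum>p<n. \<Sum>q<n. hw n * hw n * (E p * E q) * (?H p a * ?H q c * D a c))" .
    qed
    also have "\<dots> = (\<Sum>p<n. \<Sum>q<n. \<Sum>a<n. \<Sum>c<n. hw n * hw n * (E p * E q) * (?H p a * ?H q c * D a c))"
      by (rule swap22)
    also have "\<dots> = (\<Sum>p<n. \<Sum>q<n. F (p, q))"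
      unfolding F_def P_def by (simp only: sum_distrib_left fst_conv snd_conv)
    also have "\<dots> = (\<Sum>x\<in>{..<n} \<times> {..<n}. F x)"
      by (simp add: sum.cartesian_product)
    also have "\<dots> = (\<Sum>q\<in>Pairs n. \<Sum>x\<in>fib q. F x)"
      unfolding fib_def
      by (rule sum.group[symmetric]) (use Pairs_finite in \<open>auto simp: Pairs_def\<close>)
    also have "\<dots> = (\<Sum>q\<in>Pairs n. cc q * exp (\<mu> q * s))"
    proof (rule sum.cong[OF refl])
      fix q assume q: "q \<in> Pairs n"
      have "F x = exp (\<mu> q * s) * (hw n * hw n * P (fst x) (snd x))" if x: "x \<in> fib q" for x
      proof -
        have h: "lam (fst x) + lam (snd x) = \<mu> q"
          using x unfolding fib_def \<mu>_def by (auto simp: min_def max_def split: if_splits)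
        have h2: "t k * lam (fst x) + t k * lam (snd x) = \<mu> q * t k"
          by (simp add: h[symmetric] algebra_simps)
        have "E (fst x) * E (snd x) = exp (t k * lam (fst x) + t k * lam (snd x))"
          unfolding E_def by (simp add: exp_add)
        then have "E (fst x) * E (snd x) = exp (\<mu> q * s)"
          unfolding h2 k by simp
        then show ?thesis unfolding F_def by (simp add: mult_ac)
      qed
      then have "(\<Sum>x\<in>fib q. F x) = (\<Sum>x\<in>fib q. exp (\<mu> q * s) * (hw n * hw n * P (fst x) (snd x)))"
        by (rule sum.cong[OF refl])
      also have "\<dots> = cc q * exp (\<mu> q * s)"
        unfolding cc_def by (simp add: sum_distrib_left mult_ac)
      finally show "(\<Sum>x\<in>fib q. F x) = cc q * exp (\<mu> q * s)" .
    qed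
    finally show "(\<Sum>q\<in>Pairs n. cc q * exp (\<mu> q * s)) = 0" by simp
  qed
  have P0: "P p q = 0" if pq: "p < n" "q < n" for p q
  proof -
    let ?q = "(min p q, max p q)"
    have qP: "?q \<in> Pairs n" using pq by (auto simp: Pairs_def)
    have h: "(\<Sum>x\<in>fib ?q. P (fst x) (snd x)) = 0"
      using cc0[OF qP] hw_nz[OF n] unfolding cc_def by simp
    have fs: "(\<Sum>x\<in>fib ?q. P (fst x) (snd x)) = (if fst ?q = snd ?q then P (fst ?q) (snd ?q) else P (fst ?q) (snd ?q) + P (snd ?q) (fst ?q))"
      unfolding fib_def using fiber_sum[OF qP, of "\<lambda>x. P (fst x) (snd x)"] by simp
    have "(if fst ?q = snd ?q then P (fst ?q) (snd ?q) else P (fst ?q) (snd ?q) + P (snd ?q) (fst ?q)) = 0"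
      by (subst fs[symmetric]) (rule h)
    then have "P (min p q) (max p q) = 0" using Psym[of "min p q" "max p q"] by (simp split: if_splits)
    then show ?thesis using Psym[of p q] by (cases "p \<le> q") (auto simp: min_def max_def)
  qed
  have D0: "D a c = 0" if "a < n" "c < n" for a c
  proof -
    have "D a c = (\<Sum>p<n. \<Sum>q<n. ?H a p * ?H c q * P p q)"
      unfolding P_def using HH_inv[OF that, of b D] by simp
    also have "\<dots> = 0" using P0 by simp
    finally show ?thesis .
  qed
  obtain i j where ij: "e r = (i, j)" by (cases "e r") auto
  have ijP: "(i, j) \<in> Pairs n" using e r ij by (metis bij_betwE lessThan_iff)
  then have ij2: "i \<le> j" "j < n" by (auto simp: Pairs_def)
  have inj: "inj_on e {..<N}" using e by (rule bij_betw_imp_inj_on)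
  have "Gam (e r') i j = (if r' = r then 1 else 0)" if r': "r' < N" for r'
  proof -
    have er': "e r' \<in> Pairs n" using e r' by (metis bij_betwE lessThan_iff)
    have "((i, j) = e r' \<or> (j, i) = e r') \<longleftrightarrow> e r' = e r"
      using er' ij ij2 by (auto simp: Pairs_def)
    also have "\<dots> \<longleftrightarrow> r' = r" using inj r r' by (auto simp: inj_on_def)
    finally show ?thesis unfolding Gam_def by simp
  qed
  then have "D i j = (\<Sum>r'<N. if r' = r then g r' else 0)"
    unfolding D_def by (intro sum.cong refl) auto
  also have "\<dots> = g r" using r by simp
  finally show "g r = 0" using D0[of i j] ij2 by simp
qed



lemma det_holo:
  assumes "\<And>i j. (\<lambda>w. F w i j) holomorphic_on UNIV"
  shows "(\<lambda>w. Determinant.det (Matrix.mat N N (\<lambda>(i,j). F w i j))) holomorphic_on UNIV"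
proof -
  have eq: "Determinant.det (Matrix.mat N N (\<lambda>(i,j). F w i j)) =
      (\<Sum>p\<in>{p. p permutes {0..<N}}. signof p * (\<Prod>i=0..<N. F w i (p i)))" for w
  proof -
    have "Determinant.det (Matrix.mat N N (\<lambda>(i,j). F w i j)) =
      (\<Sum>p\<in>{p. p permutes {0..<N}}. signof p * (\<Prod>i=0..<N. Matrix.mat N N (\<lambda>(i,j). F w i j) $$ (i, p i)))"
      by (rule det_def') simp
    also have "\<dots> = (\<Sum>p\<in>{p. p permutes {0..<N}}. signof p * (\<Prod>i=0..<N. F w i (p i)))"
    proof (rule sum.cong[OF refl])
      fix p assume "p \<in> {p. p permutes {0..<N}}"
      then have "p i < N" if "i < N" for i using permutes_in_image[of p "{0..<N}" i] that by auto
      then show "signof p * (\<Prod>i=0..<N. Matrix.mat N N (\<lambda>(i,j). F w i j) $$ (i, p i)) =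
                 signof p * (\<Prod>i=0..<N. F w i (p i))"
        by (intro arg_cong[where f="\<lambda>x. signof p * x"] prod.cong) auto
    qed
    finally show ?thesis .
  qed
  show ?thesis unfolding eq
    by (intro holomorphic_on_sum holomorphic_on_mult holomorphic_on_prod holomorphic_on_const assms)
qed

lemma det_meas:
  assumes "\<And>i j. (\<lambda>p. F p i j) \<in> borel_measurable M"
  shows "(\<lambda>p. Determinant.det (Matrix.mat N N (\<lambda>(i,j). F p i j)) :: real) \<in> borel_measurable M"
proof -
  have eq: "Determinant.det (Matrix.mat N N (\<lambda>(i,j). F w i j)) =
      (\<Sum>p\<in>{p. p permutes {0..<N}}. signof p * (\<Prod>i=0..<N. F w i (p i)))" for w
  proof -
    have "Determinant.det (Matrix.mat N N (\<lambda>(i,j). F w i j)) =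
      (\<Sum>p\<in>{p. p permutes {0..<N}}. signof p * (\<Prod>i=0..<N. Matrix.mat N N (\<lambda>(i,j). F w i j) $$ (i, p i)))"
      by (rule det_def') simp
    also have "\<dots> = (\<Sum>p\<in>{p. p permutes {0..<N}}. signof p * (\<Prod>i=0..<N. F w i (p i)))"
    proof (rule sum.cong[OF refl])
      fix p assume "p \<in> {p. p permutes {0..<N}}"
      then have "p i < N" if "i < N" for i using permutes_in_image[of p "{0..<N}" i] that by auto
      then show "signof p * (\<Prod>i=0..<N. Matrix.mat N N (\<lambda>(i,j). F w i j) $$ (i, p i)) =
                 signof p * (\<Prod>i=0..<N. F w i (p i))"
        by (intro arg_cong[where f="\<lambda>x. signof p * x"] prod.cong) auto
    qed
    finally show ?thesis .
  qed
  show ?thesis unfolding eq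
    by (intro borel_measurable_sum borel_measurable_times borel_measurable_prod borel_measurable_const assms)
qed

lemma det_of_real:
  "Determinant.det (Matrix.mat N N (\<lambda>(k,r). complex_of_real (f k r))) = of_real (Determinant.det (Matrix.mat N N (\<lambda>(k,r). f k r)))"
proof -
  have "Matrix.mat N N (\<lambda>(k,r). complex_of_real (f k r)) = map_mat of_real (Matrix.mat N N (\<lambda>(k,r). f k r))"
    by (rule eq_matI) auto
  then show ?thesis by (simp add: of_real_hom.hom_det)
qed

lemma coord_index_finite: "finite (coord_index m)"
  unfolding coord_index_def
  by (intro finite_UnI finite_imageI finite_cartesian_product finite_subset[of "{(i,j). i \<le> j \<and> j < 2*m}" "{..<2*m} \<times> {..<2*m}"]) auto

theorem mainTheorem2:
  fixes m :: nat and b :: "nat \<Rightarrow> real" and t :: "nat \<Rightarrow> real"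
  assumes "m \<ge> 1"
    and "(\<Sum>i<2*m. (b i)\<^sup>2) = 1"
    and "inj_on t {..<m*(2*m+1)}"
    and "\<forall>k<m*(2*m+1). t k \<ge> 0"
  shows "AE p in coord_measure m.
           in_GG m (Cmat p) (Bmat p) \<longrightarrow>
             inj_on (\<lambda>G. map (\<lambda>k. bilin (2*m) b
                          (mmult (2*m) (mmult (2*m) (Xt m (Cmat p) (t k)) G) (mtrans (Xt m (Cmat p) (t k)))) b)
                        [0..<m*(2*m+1)])
                    (sym_mats (2*m))
           \<and> inj_on (\<lambda>d. map (\<lambda>k. bilin (2*m) b (Xt m (Cmat p) (t k)) d) [0..<2*m])
                    (vecs (2*m))"
proof -
  have m1: "m \<ge> 1" and bunit: "(\<Sum>i<2*m. (b i)^2) = 1" and tinj: "inj_on t {..<m*(2*m+1)}"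
    using assms by auto
  have n0: "2*m > 0" using m1 by simp
  have nN: "2*m \<le> m*(2*m+1)" using m1 by simp
  have tinj2: "inj_on t {..<2*m}" by (rule inj_on_subset[OF tinj]) (use nN in auto)
  obtain e where e: "bij_betw e {..<m*(2*m+1)} (Pairs (2*m))" using Pairs_bij by blast
  let ?I = "coord_index m"
  let ?M = "PiM ?I (\<lambda>_. lborel) :: ((nat \<times> nat) + (nat \<times> nat) \<Rightarrow> real) measure"
  define cX where "cX z k = cmexp (2*m) (\<lambda>i j. complex_of_real (t k) * z (Inl (i,j)))"
    for z :: "(nat \<times> nat) + (nat \<times> nat) \<Rightarrow> complex" and k
  define ca where "ca z k a = (\<Sum>i<2*m. complex_of_real (b i) * cX z k i a)" for z k a
  define G where "G z = Determinant.det (Matrix.mat (m*(2*m+1)) (m*(2*m+1))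
      (\<lambda>(k,r). \<Sum>a<2*m. \<Sum>c<2*m. ca z k a * ca z k c * complex_of_real (Gam (e r) a c)))
    * Determinant.det (Matrix.mat (2*m) (2*m) (\<lambda>(k,a). ca z k a))" for z
  define RX where "RX p k = Xt m (Cmat p) (t k)" for p k
  define rG where "rG p = Determinant.det (Matrix.mat (m*(2*m+1)) (m*(2*m+1))
      (\<lambda>(k,r). \<Sum>a<2*m. \<Sum>c<2*m. alpha (2*m) b (RX p k) a * alpha (2*m) b (RX p k) c * Gam (e r) a c))
    * Determinant.det (Matrix.mat (2*m) (2*m) (\<lambda>(k,a). alpha (2*m) b (RX p k) a))" for p
  have cX_real: "cX (\<lambda>x. complex_of_real (p x)) k i a = complex_of_real (RX p k i a)" if "i < 2*m" for p k i a
  proof -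
    have "(\<lambda>i j. complex_of_real (t k) * complex_of_real (p (Inl (i,j)))) = (\<lambda>i j. complex_of_real (t k * p (Inl (i,j))))"
      by simp
    then show ?thesis
      unfolding cX_def RX_def Xt_def Cmat_def using cmexp_of_real[OF that, of "\<lambda>i j. t k * p (Inl (i,j))" a] by simp
  qed
  have ca_real: "ca (\<lambda>x. complex_of_real (p x)) k a = complex_of_real (alpha (2*m) b (RX p k) a)" for p k a
    unfolding ca_def alpha_def by (simp add: cX_real)
  have G_real: "G (\<lambda>x. complex_of_real (p x)) = complex_of_real (rG p)" for p
  proof -
    have e1: "(\<lambda>(k,r). \<Sum>a<2*m. \<Sum>c<2*m. ca (\<lambda>x. complex_of_real (p x)) k a * ca (\<lambda>x. complex_of_real (p x)) k c * complex_of_real (Gam (e r) a c))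
       = (\<lambda>(k,r). complex_of_real (\<Sum>a<2*m. \<Sum>c<2*m. alpha (2*m) b (RX p k) a * alpha (2*m) b (RX p k) c * Gam (e r) a c))"
      by (auto simp: ca_real)
    have e2: "(\<lambda>(k,a). ca (\<lambda>x. complex_of_real (p x)) k a) = (\<lambda>(k,a). complex_of_real (alpha (2*m) b (RX p k) a))"
      by (auto simp: ca_real)
    show ?thesis unfolding G_def rG_def e1 e2 det_of_real by simp
  qed
  have ca_holo: "(\<lambda>w. ca (z(x:=w)) k a) holomorphic_on UNIV" for z x k a
  proof -
    define \<alpha> where "\<alpha> i j = (if Inl (i,j) = x then 0 else complex_of_real (t k) * z (Inl (i,j)))" for i j
    define \<beta> where "\<beta> i j = (if Inl (i,j) = x then complex_of_real (t k) else 0)" for i j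
    have eq: "cX (z(x:=w)) k i a = cmexp (2*m) (\<lambda>i j. \<alpha> i j + \<beta> i j * w) i a" for w i
    proof -
      have "(\<lambda>i j. complex_of_real (t k) * (z(x:=w)) (Inl (i,j))) = (\<lambda>i j. \<alpha> i j + \<beta> i j * w)"
        unfolding \<alpha>_def \<beta>_def by (auto simp: fun_eq_iff)
      then show ?thesis unfolding cX_def by simp
    qed
    show ?thesis unfolding ca_def eq
      by (intro holomorphic_on_sum holomorphic_on_mult holomorphic_on_const cmexp_holo) auto
  qed
  have hol: "(\<lambda>w. G (z(x:=w))) holomorphic_on UNIV" for z x
    unfolding G_def
    by (intro holomorphic_on_mult det_holo[where F="\<lambda>w k r. \<Sum>a<2*m. \<Sum>c<2*m. ca (z(x:=w)) k a * ca (z(x:=w)) k c * complex_of_real (Gam (e r) a c)", simplified]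
        det_holo[where F="\<lambda>w k a. ca (z(x:=w)) k a", simplified]
        holomorphic_on_sum holomorphic_on_const ca_holo)
  have RXm: "(\<lambda>p. RX p k i a) \<in> borel_measurable ?M" if "i < 2*m" for k i a
    unfolding RX_def Xt_def Cmat_def
    by (rule mexp_meas[OF _ that]) (intro borel_measurable_times borel_measurable_const component_meas)
  have am: "(\<lambda>p. alpha (2*m) b (RX p k) a) \<in> borel_measurable ?M" for k a
    unfolding alpha_def by (intro borel_measurable_sum borel_measurable_times borel_measurable_const RXm) auto
  have rGm: "rG \<in> borel_measurable ?M"
  proof -
    have "(\<lambda>p. rG p) \<in> borel_measurable ?M"
      unfolding rG_def
      by (intro borel_measurable_times det_meas[where F="\<lambda>p k r. \<Sum>a<2*m. \<Sum>c<2*m. alpha (2*m) b (RX p k) a * alpha (2*m) b (RX p k) c * Gam (e r) a c", simplified]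
          det_meas[where F="\<lambda>p k a. alpha (2*m) b (RX p k) a", simplified]
          borel_measurable_sum borel_measurable_const am)
    then show ?thesis by simp
  qed
  have Gm: "(\<lambda>p. G (\<lambda>x. complex_of_real (p x))) \<in> borel_measurable ?M"
    unfolding G_real by (rule measurable_compose[OF rGm borel_measurable_of_real])
  define C0 where "C0 i j = (\<Sum>a<2*m. HH (2*m) b i a * lam a * HH (2*m) b a j)" for i j
  define x0 where "x0 x = (if x \<in> ?I then (case x of Inl q \<Rightarrow> C0 (fst q) (snd q) | Inr _ \<Rightarrow> 0) else undefined)" for x
  have x0I: "x0 \<in> PiE ?I (\<lambda>_. UNIV)" by (auto simp: x0_def PiE_def extensional_def)
  have RX0: "RX x0 k i j = (\<Sum>a<2*m. HH (2*m) b i a * exp (t k * lam a) * HH (2*m) b a j)"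
    if ij: "i < 2*m" "j < 2*m" for k i j
  proof -
    have "RX x0 k i j = mexp (2*m) (\<lambda>i j. \<Sum>a<2*m. HH (2*m) b i a * (t k * lam a) * HH (2*m) b a j) i j"
      unfolding RX_def Xt_def
    proof (rule mexp_agree[OF _ ij(1)])
      fix i j assume "i < 2*m" "j < 2*m"
      then have "Inl (i,j) \<in> ?I" by (auto simp: coord_index_def)
      then show "t k * Cmat x0 i j = (\<Sum>a<2*m. HH (2*m) b i a * (t k * lam a) * HH (2*m) b a j)"
        unfolding Cmat_def x0_def C0_def by (simp add: sum_distrib_left mult_ac)
    qed
    also have "\<dots> = (\<Sum>a<2*m. HH (2*m) b i a * exp (t k * lam a) * HH (2*m) b a j)"
      by (rule mexp_conj[OF HH_orth ij])
    finally show ?thesis .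
  qed
  have "rG x0 \<noteq> 0"
    unfolding rG_def
    using wit1[OF n0 bunit e tinj, of "RX x0"] wit2[OF n0 bunit tinj2, of "RX x0"] RX0 by simp
  then have Gx0: "G (\<lambda>x. complex_of_real (x0 x)) \<noteq> 0" unfolding G_real by simp
  have null: "{p \<in> space ?M. G (\<lambda>x. complex_of_real (p x)) = 0} \<in> null_sets ?M"
    by (rule zero_null[OF coord_index_finite hol Gm x0I Gx0])
  show ?thesis
    unfolding coord_measure_def
  proof (rule AE_I'[OF null], rule subsetI)
    fix p assume pm: "p \<in> {p \<in> space ?M. \<not> (in_GG m (Cmat p) (Bmat p) \<longrightarrow>
             inj_on (\<lambda>G. map (\<lambda>k. bilin (2*m) b
                          (mmult (2*m) (mmult (2*m) (Xt m (Cmat p) (t k)) G) (mtrans (Xt m (Cmat p) (t k)))) b)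
                        [0..<m*(2*m+1)])
                    (sym_mats (2*m))
           \<and> inj_on (\<lambda>d. map (\<lambda>k. bilin (2*m) b (Xt m (Cmat p) (t k)) d) [0..<2*m])
                    (vecs (2*m)))}"
    then have p: "p \<in> space ?M"
      and np: "\<not> (inj_on (\<lambda>G. map (\<lambda>k. bilin (2*m) b
                          (mmult (2*m) (mmult (2*m) (Xt m (Cmat p) (t k)) G) (mtrans (Xt m (Cmat p) (t k)))) b)
                        [0..<m*(2*m+1)])
                    (sym_mats (2*m))
           \<and> inj_on (\<lambda>d. map (\<lambda>k. bilin (2*m) b (Xt m (Cmat p) (t k)) d) [0..<2*m])
                    (vecs (2*m)))" by auto
    have "G (\<lambda>x. complex_of_real (p x)) = 0"
    proof (rule ccontr)
      assume "G (\<lambda>x. complex_of_real (p x)) \<noteq> 0"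
      then have "rG p \<noteq> 0" unfolding G_real by simp
      then have d1: "Determinant.det (Matrix.mat (m*(2*m+1)) (m*(2*m+1))
            (\<lambda>(k,r). \<Sum>a<2*m. \<Sum>c<2*m. alpha (2*m) b (Xt m (Cmat p) (t k)) a * alpha (2*m) b (Xt m (Cmat p) (t k)) c * Gam (e r) a c)) \<noteq> 0"
        and d2: "Determinant.det (Matrix.mat (2*m) (2*m) (\<lambda>(k,a). alpha (2*m) b (Xt m (Cmat p) (t k)) a)) \<noteq> 0"
        unfolding rG_def RX_def by auto
      have "inj_on (\<lambda>G. map (\<lambda>k. bilin (2*m) b
                          (mmult (2*m) (mmult (2*m) (Xt m (Cmat p) (t k)) G) (mtrans (Xt m (Cmat p) (t k)))) b)
                        [0..<m*(2*m+1)]) (sym_mats (2*m))"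
        by (rule inj1[OF e d1])
      moreover have "inj_on (\<lambda>d. map (\<lambda>k. bilin (2*m) b (Xt m (Cmat p) (t k)) d) [0..<2*m]) (vecs (2*m))"
        by (rule inj2[OF d2])
      ultimately show False using np by blast
    qed
    then show "p \<in> {p \<in> space ?M. G (\<lambda>x. complex_of_real (p x)) = 0}" using p by simp
  qed
qed

end
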